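(* Write $\chi_n^*(M_{1,2}(F))=\sum m_{\langle\lambda\rangle}\chi_{\langle\lambda\rangle}$, the sum over multipartitions $\langle\lambda\rangle=(\lambda(1),\lambda(2),\lambda(3),\lambda(4))\vdash n$ with $h(\lambda(1))\le2$, $h(\lambda(2))\le3$, $h(\lambda(3))\le2$, $h(\lambda(4))\le2$. Let $\langle\lambda\rangle=(\lambda(1),\lambda(2),\emptyset,\lambda(4))$ with $\lambda(2)=(\gamma_1+\gamma_2+\gamma_3,\gamma_2+\gamma_3,\gamma_3)\neq\emptyset$ and $\lambda(4)=(\rho_1+\rho_2,\rho_2)\neq\emptyset$ (all $\gamma_i,\rho_i\ge0$ integers). If either $\rho_1\le2$, or $\rho_1\ge3$ and $\gamma_1+\gamma_2\ge\lceil\rho_1/2\rceil-1$, then $m_{\langle\lambda\rangle}\neq0$.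
   Context: $F$ is a field of characteristic zero. $M_{1,2}(F)$ is $M_3(F)$ with $\mathbb{Z}_2$-grading with even part spanned by $e_{11},e_{22},e_{23},e_{32},e_{33}$, odd part by $e_{12},e_{13},e_{21},e_{31}$, and orthosymplectic superinvolution $*$ sending the matrix with rows $(a,b,c),(d,e,f),(g,h,i)$ to the matrix with rows $(a,-g,d),(c,i,-f),(-b,-h,e)$. Its even symmetric, even skew, odd symmetric, odd skew parts are $\mathrm{span}\{e_{11},e_{22}+e_{33}\}$, $\mathrm{span}\{e_{22}-e_{33},e_{23},e_{32}\}$, $\mathrm{span}\{e_{12}-e_{31},e_{13}+e_{21}\}$, $\mathrm{span}\{e_{12}+e_{31},e_{13}-e_{21}\}$. In the free $*$-superalgebra on variables $y_i^+,y_i^-,z_i^+,z_i^-$ (even symmetric, even skew, odd symmetric, odd skew), a $*$-identity is a polynomial vanishing under all substitutions of the variables by elements of the corresponding parts; $Id_2^*$ denotes the set of them. $P_n^*$ is the span of the monomials $w_{\sigma(1)}\cdots w_{\sigma(n)}$, $\sigma\in S_n$, $w_i\in\{y_i^+,y_i^-,z_i^+,z_i^-\}$. The group $\mathbb{H}_n=(\mathbb{Z}_2\times\mathbb{Z}_2)\wr S_n$, with $\mathbb{Z}_2\times\mathbb{Z}_2=\{1,*,\zeta,*\zeta\}$, acts on $P_n^*$: $h=(a_1,\dots,a_n;\sigma)$ sends $y_i^+\mapsto y_{\sigma(i)}^+$, $y_i^-\mapsto \pm y_{\sigma(i)}^-$ (sign $+$ iff $a_{\sigma(i)}\in\{1,\zeta\}$),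 $z_i^+\mapsto\pm z_{\sigma(i)}^+$ ($+$ iff $a_{\sigma(i)}\in\{1,*\}$), $z_i^-\mapsto\pm z_{\sigma(i)}^-$ ($+$ iff $a_{\sigma(i)}\in\{1,*\zeta\}$). The character of $P_n^*/(P_n^*\cap Id_2^*(M_{1,2}(F)))$ is the $n$-th $*$-cocharacter $\chi_n^*(M_{1,2}(F))$. Irreducible $\mathbb{H}_n$-characters $\chi_{\langle\lambda\rangle}$ correspond to multipartitions $\langle\lambda\rangle=(\lambda(1),\dots,\lambda(4))$, $\lambda(i)\vdash n_i$, $\sum n_i=n$, with $\lambda(1),\dots,\lambda(4)$ corresponding to the variable types $y^+,y^-,z^+,z^-$; equivalently $m_{\langle\lambda\rangle}$ is the multiplicity of $\chi_{\lambda(1)}\otimes\cdots\otimes\chi_{\lambda(4)}$ in the $S_{n_1}\times\cdots\times S_{n_4}$-character of the multilinear polynomials with $n_1,\dots,n_4$ variables of the four types modulo identities. $h(\mu)$ is the height of a partition $\mu$; $\emptyset$ is the empty partition; $\lceil c\rceil$ is the least integer $\ge c$. *)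

theory Defs
  imports Complex_Main "HOL-Library.Function_Algebras" "HOL-Combinatorics.Permutations"
begin

text \<open>3x3 matrices are functions nat => nat => F, indices 0,1,2 (0-based: entry (i,j)
  is e_{i+1,j+1} of the paper), and zero outside.\<close>

type_synonym 'a mat3 = "nat \<Rightarrow> nat \<Rightarrow> 'a"

definition M3 :: "('a::zero) mat3 set" where
  "M3 = {A. \<forall>i j. (3 \<le> i \<or> 3 \<le> j) \<longrightarrow> A i j = 0}"

definition mmul :: "('a::comm_semiring_1) mat3 \<Rightarrow> 'a mat3 \<Rightarrow> 'a mat3" where
  "mmul A B = (\<lambda>i j. \<Sum>k<3. A i k * B k j)"

definition mone :: "('a::comm_semiring_1) mat3" where
  "mone = (\<lambda>i j. if i < 3 \<and> i = j then 1 else 0)"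

definition mzero :: "('a::zero) mat3" where
  "mzero = (\<lambda>i j. 0)"

definition mprod :: "('a::comm_semiring_1) mat3 list \<Rightarrow> 'a mat3" where
  "mprod As = foldr mmul As mone"

definition is_even :: "('a::zero) mat3 \<Rightarrow> bool" where
  "is_even A \<longleftrightarrow> A \<in> M3 \<and> A 0 1 = 0 \<and> A 0 2 = 0 \<and> A 1 0 = 0 \<and> A 2 0 = 0"

definition is_odd :: "('a::zero) mat3 \<Rightarrow> bool" where
  "is_odd A \<longleftrightarrow> A \<in> M3 \<and> A 0 0 = 0 \<and> A 1 1 = 0 \<and> A 1 2 = 0 \<and> A 2 1 = 0 \<and> A 2 2 = 0"

definition sinv :: "('a::ab_group_add) mat3 \<Rightarrow> 'a mat3" where
  "sinv A = (\<lambda>i j.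
     if i = 0 \<and> j = 0 then A 0 0 else
     if i = 0 \<and> j = 1 then - A 2 0 else
     if i = 0 \<and> j = 2 then A 1 0 else
     if i = 1 \<and> j = 0 then A 0 2 else
     if i = 1 \<and> j = 1 then A 2 2 else
     if i = 1 \<and> j = 2 then - A 1 2 else
     if i = 2 \<and> j = 0 then - A 0 1 else
     if i = 2 \<and> j = 1 then - A 2 1 else
     if i = 2 \<and> j = 2 then A 1 1 else 0)"

text \<open>Variable types: 0 = y^+ (even symmetric), 1 = y^- (even skew),
  2 = z^+ (odd symmetric), 3 = z^- (odd skew).\<close>
definition part :: "nat \<Rightarrow> ('a::ab_group_add) mat3 set" where
  "part k = (if k = 0 then {A. is_even A \<and> sinv A = A}
        else if k = 1 then {A. is_even A \<and> sinv A = - A}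
        else if k = 2 then {A. is_odd A \<and> sinv A = A}
        else {A. is_odd A \<and> sinv A = - A})"

definition is_partition :: "nat list \<Rightarrow> bool" where
  "is_partition la \<longleftrightarrow> sorted_wrt (\<ge>) la \<and> 0 \<notin> set la"

definition mkpart :: "nat list \<Rightarrow> nat list" where
  "mkpart xs = filter (\<lambda>x. 0 < x) xs"

text \<open>A multipartition is a list of four partitions (types y^+, y^-, z^+, z^-).
  Variables are numbered 0..<n; block k consists of the n_k variables of type k,
  with n_k = |lambda(k)|, placed consecutively.\<close>

definition sizes :: "nat list list \<Rightarrow> nat list" where
  "sizes mp = map sum_list mp"

definition total :: "nat list list \<Rightarrow> nat" where
  "total mp = sum_list (sizes mp)"

definition offs :: "nat list list \<Rightarrow> nat \<Rightarrow> nat" where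
  "offs mp k = sum_list (take k (sizes mp))"

definition blockof :: "nat list list \<Rightarrow> nat \<Rightarrow> nat" where
  "blockof mp i = (LEAST k. i < offs mp (Suc k))"

text \<open>Row / column of the cell number t (0-based, row by row) of the Young diagram of la.\<close>
definition rowof :: "nat list \<Rightarrow> nat \<Rightarrow> nat" where
  "rowof la t = (LEAST r. t < sum_list (take (Suc r) la))"

definition colof :: "nat list \<Rightarrow> nat \<Rightarrow> nat" where
  "colof la t = t - sum_list (take (rowof la t) la)"

text \<open>Canonical multitableau: the variables of block k fill the diagram of lambda(k) row by row.\<close>
definition rowkey :: "nat list list \<Rightarrow> nat \<Rightarrow> nat \<times> nat" where
  "rowkey mp i = (let k = blockof mp i in (k, rowof (mp ! k) (i - offs mp k)))"

definition colkey :: "nat list list \<Rightarrow> nat \<Rightarrow> nat \<times> nat" where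
  "colkey mp i = (let k = blockof mp i in (k, colof (mp ! k) (i - offs mp k)))"

definition rowstab :: "nat list list \<Rightarrow> (nat \<Rightarrow> nat) set" where
  "rowstab mp = {p. p permutes {0..<total mp} \<and> (\<forall>i < total mp. rowkey mp (p i) = rowkey mp i)}"

definition colstab :: "nat list list \<Rightarrow> (nat \<Rightarrow> nat) set" where
  "colstab mp = {p. p permutes {0..<total mp} \<and> (\<forall>i < total mp. colkey mp (p i) = colkey mp i)}"

text \<open>Multilinear monomials in the variables 0..<n: words using each variable exactly once.
  A multilinear polynomial is a coefficient function on words supported on monomials.
  Variable i has type blockof mp i.\<close>

definition mlwords :: "nat \<Rightarrow> nat list set" where
  "mlwords n = {w. distinct w \<and> set w = {0..<n}}"

definition Pn :: "nat \<Rightarrow> (nat list \<Rightarrow> 'a::zero) set" where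
  "Pn n = {f. \<forall>w. f w \<noteq> 0 \<longrightarrow> w \<in> mlwords n}"

definition evalp :: "(nat list \<Rightarrow> 'a::comm_ring_1) \<Rightarrow> (nat \<Rightarrow> 'a mat3) \<Rightarrow> nat \<Rightarrow> 'a mat3" where
  "evalp f s n = (\<lambda>i j. \<Sum>w\<in>mlwords n. f w * mprod (map s w) i j)"

definition admissible :: "nat list list \<Rightarrow> (nat \<Rightarrow> ('a::comm_ring_1) mat3) \<Rightarrow> bool" where
  "admissible mp s \<longleftrightarrow> (\<forall>i < total mp. s i \<in> part (blockof mp i))"

definition IdP :: "nat list list \<Rightarrow> (nat list \<Rightarrow> 'a::comm_ring_1) set" where
  "IdP mp = {f \<in> Pn (total mp). \<forall>s. admissible mp s \<longrightarrow> evalp f s (total mp) = mzero}"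

text \<open>Left action of a permutation g of the variables: g . (x_{w1}...x_{wn}) = x_{g w1}...x_{g wn}.\<close>
definition pact :: "(nat \<Rightarrow> nat) \<Rightarrow> (nat list \<Rightarrow> 'a) \<Rightarrow> (nat list \<Rightarrow> 'a)" where
  "pact g f = (\<lambda>w. f (map (inv g) w))"

text \<open>Young symmetrizer e_T = (sum of row permutations)(signed sum of column permutations)
  of the canonical multitableau T, for the group S_{n_1} x ... x S_{n_4}.\<close>
definition youngsym :: "nat list list \<Rightarrow> (nat list \<Rightarrow> 'a::comm_ring_1) \<Rightarrow> (nat list \<Rightarrow> 'a)" where
  "youngsym mp f = (\<lambda>w. \<Sum>r\<in>rowstab mp. \<Sum>c\<in>colstab mp. of_int (sign c) * pact (r \<circ> c) f w)"

definition fscale :: "'a::field \<Rightarrow> (nat list \<Rightarrow> 'a) \<Rightarrow> (nat list \<Rightarrow> 'a)" where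
  "fscale c f = (\<lambda>w. c * f w)"

definition fdim :: "(nat list \<Rightarrow> 'a::field) set \<Rightarrow> nat" where
  "fdim V = vector_space.dim fscale V"

definition fspan :: "(nat list \<Rightarrow> 'a::field) set \<Rightarrow> (nat list \<Rightarrow> 'a) set" where
  "fspan V = module.span fscale V"

text \<open>Multiplicity m_lambda of chi_{lambda(1)} x ... x chi_{lambda(4)} in the
  S_{n_1} x ... x S_{n_4}-module Q = P_{n_1,..,n_4}/(P_{n_1,..,n_4} \<inter> Id):
  m_lambda = dim Hom(S^lambda, Q) = dim (e_T Q), where e_T Q = (e_T P + I)/I.\<close>
definition mult :: "'a::field_char_0 itself \<Rightarrow> nat list list \<Rightarrow> nat" where
  "mult _ mp = fdim (fspan (youngsym mp ` (Pn (total mp) :: (nat list \<Rightarrow> 'a) set) \<union> IdP mp))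
               - fdim (IdP mp :: (nat list \<Rightarrow> 'a) set)"

end

theory Submission
  imports Defs
begin



lemma sum3: "(\<Sum>k<(3::nat). f k) = f 0 + f 1 + f 2"
  by (simp add: numeral_3_eq_3 numeral_2_eq_2 lessThan_Suc add_ac)

lemma mmul_assoc: "mmul (mmul A B) C = mmul A (mmul B (C::('a::comm_semiring_1) mat3))"
  by (simp add: mmul_def sum3 fun_eq_iff algebra_simps)

lemma M3I: "(\<And>i j. 3 \<le> i \<or> 3 \<le> j \<Longrightarrow> A i j = 0) \<Longrightarrow> A \<in> M3"
  by (auto simp: M3_def)

lemma M3D: "A \<in> M3 \<Longrightarrow> 3 \<le> i \<or> 3 \<le> j \<Longrightarrow> A i j = 0"
  by (auto simp: M3_def)

lemma mmul_M3: "A \<in> M3 \<Longrightarrow> B \<in> M3 \<Longrightarrow> mmul A B \<in> (M3 :: ('a::comm_semiring_1) mat3 set)"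
  by (rule M3I) (auto simp: mmul_def M3D)

lemma mone_M3: "mone \<in> M3"
  by (rule M3I) (auto simp: mone_def)

lemma mat_eqI: "A \<in> M3 \<Longrightarrow> B \<in> M3 \<Longrightarrow> (\<And>i j. i < 3 \<Longrightarrow> j < 3 \<Longrightarrow> A i j = B i j) \<Longrightarrow> A = B"
  by (rule ext, rule ext) (metis M3D not_le)

lemma less3: "(i::nat) < 3 \<longleftrightarrow> i = 0 \<or> i = 1 \<or> i = 2"
  by auto

lemma mmul_mone_right: "A \<in> M3 \<Longrightarrow> mmul A mone = (A::('a::comm_semiring_1) mat3)"
  by (rule mat_eqI[OF mmul_M3[OF _ mone_M3]]) (auto simp: mmul_def sum3 mone_def less3)

lemma mmul_mone_left: "A \<in> M3 \<Longrightarrow> mmul mone A = (A::('a::comm_semiring_1) mat3)"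
  by (rule mat_eqI[OF mmul_M3[OF mone_M3]]) (auto simp: mmul_def sum3 mone_def less3)

lemma mprod_Nil[simp]: "mprod [] = mone" by (simp add: mprod_def)
lemma mprod_Cons[simp]: "mprod (x # xs) = mmul x (mprod xs)" by (simp add: mprod_def)

lemma mprod_M3: "set xs \<subseteq> M3 \<Longrightarrow> mprod xs \<in> (M3 :: ('a::comm_semiring_1) mat3 set)"
  by (induction xs) (auto simp: mone_M3 mmul_M3)

lemma mprod_append: "set xs \<subseteq> M3 \<Longrightarrow> set ys \<subseteq> M3 \<Longrightarrow>
   mprod (xs @ ys) = mmul (mprod xs) (mprod (ys :: ('a::comm_semiring_1) mat3 list))"
  by (induction xs) (auto simp: mmul_mone_left mprod_M3 mmul_assoc)

lemma mprod_single: "x \<in> M3 \<Longrightarrow> mprod [x] = (x::('a::comm_semiring_1) mat3)"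
  by (simp add: mmul_mone_right)

definition Cset :: "(nat \<Rightarrow> 'k) \<Rightarrow> nat set \<Rightarrow> (nat \<Rightarrow> nat) set" where
  "Cset key S = {p. p permutes S \<and> (\<forall>i\<in>S. key (p i) = key i)}"

lemma Cset_finite: "finite S \<Longrightarrow> finite (Cset key S)"
  unfolding Cset_def by (rule finite_subset[OF _ finite_permutations[of S]]) auto

lemma Cset_split:
  assumes fin: "finite A" "finite B" and disj: "A \<inter> B = {}"
    and kd: "\<And>a b. a \<in> A \<Longrightarrow> b \<in> B \<Longrightarrow> key a \<noteq> key b"
  shows "sum h (Cset key (A \<union> B)) = (\<Sum>p\<in>Cset key A. \<Sum>q\<in>Cset key B. h (p \<circ> q))"
proof -
  let ?f = "\<lambda>(p,q). p \<circ> (q::nat\<Rightarrow>nat)"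
  have img: "Cset key (A \<union> B) = ?f ` (Cset key A \<times> Cset key B)"
  proof
    show "?f ` (Cset key A \<times> Cset key B) \<subseteq> Cset key (A \<union> B)"
    proof clarify
      fix p q assume p: "p \<in> Cset key A" and q: "q \<in> Cset key B"
      have pp: "p permutes A \<union> B" using p unfolding Cset_def by (auto intro: permutes_subset)
      have qp: "q permutes A \<union> B" using q unfolding Cset_def by (auto intro: permutes_subset)
      have "p \<circ> q permutes A \<union> B" by (rule permutes_compose[OF qp pp])
      moreover have "key ((p \<circ> q) i) = key i" if "i \<in> A \<union> B" for i
      proof (cases "i \<in> A")
        case True
        then have "i \<notin> B" using disj by auto
        then have "q i = i" using q unfolding Cset_def by (auto simp: permutes_not_in)
        then show ?thesis using p True unfolding Cset_def by auto
      next
        case False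
        then have iB: "i \<in> B" using that by auto
        then have "q i \<in> B" using q unfolding Cset_def by (auto simp: permutes_in_image)
        then have "q i \<notin> A" using disj by auto
        then have "p (q i) = q i" using p unfolding Cset_def by (auto simp: permutes_not_in)
        then show ?thesis using q iB unfolding Cset_def by auto
      qed
      ultimately show "p \<circ> q \<in> Cset key (A \<union> B)" unfolding Cset_def by auto
    qed
  next
    show "Cset key (A \<union> B) \<subseteq> ?f ` (Cset key A \<times> Cset key B)"
    proof
      fix c assume c: "c \<in> Cset key (A \<union> B)"
      then have cp: "c permutes A \<union> B" and ck: "\<And>i. i \<in> A \<union> B \<Longrightarrow> key (c i) = key i"
        unfolding Cset_def by auto
      have mapsA: "c i \<in> A" if "i \<in> A" for i
      proof -
        have "c i \<in> A \<union> B" using permutes_in_image[OF cp] that by auto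
        moreover have "c i \<notin> B" using kd[OF that, of "c i"] ck[of i] that by auto
        ultimately show ?thesis by auto
      qed
      have mapsB: "c i \<in> B" if "i \<in> B" for i
      proof -
        have "c i \<in> A \<union> B" using permutes_in_image[OF cp] that by auto
        moreover have "c i \<notin> A" using kd[OF _ that, of "c i"] ck[of i] that by auto
        ultimately show ?thesis by auto
      qed
      have injc: "inj c" using cp by (rule permutes_inj)
      have surjc: "\<And>y. \<exists>x. c x = y" using cp unfolding permutes_def by blast
      define p where "p = (\<lambda>i. if i \<in> A then c i else i)"
      define q where "q = (\<lambda>i. if i \<in> B then c i else i)"
      have bijA: "bij_betw c A A"
      proof -
        have "c ` A = A"
        proof
          show "c ` A \<subseteq> A" using mapsA by auto
          show "A \<subseteq> c ` A"
          proof
            fix y assume y: "y \<in> A"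
            obtain x where x: "c x = y" using surjc by blast
            have "x \<in> A"
            proof (rule ccontr)
              assume "x \<notin> A"
              then have "x \<in> B \<or> x \<notin> A \<union> B" by auto
              then show False
              proof
                assume "x \<in> B" then have "c x \<in> B" by (rule mapsB)
                then show False using x y disj by auto
              next
                assume "x \<notin> A \<union> B" then have "c x = x" using cp by (auto simp: permutes_not_in)
                then show False using x y \<open>x \<notin> A\<close> by auto
              qed
            qed
            then show "y \<in> c ` A" using x by auto
          qed
        qed
        then show ?thesis using injc by (auto simp: bij_betw_def inj_on_def inj_def)
      qed
      have bijB: "bij_betw c B B"
      proof -
        have "c ` B = B"
        proof
          show "c ` B \<subseteq> B" using mapsB by auto
          show "B \<subseteq> c ` B"
          proof
            fix y assume y: "y \<in> B"
            obtain x where x: "c x = y" using surjc by blast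
            have "x \<in> B"
            proof (rule ccontr)
              assume "x \<notin> B"
              then have "x \<in> A \<or> x \<notin> A \<union> B" by auto
              then show False
              proof
                assume "x \<in> A" then have "c x \<in> A" by (rule mapsA)
                then show False using x y disj by auto
              next
                assume "x \<notin> A \<union> B" then have "c x = x" using cp by (auto simp: permutes_not_in)
                then show False using x y \<open>x \<notin> B\<close> by auto
              qed
            qed
            then show "y \<in> c ` B" using x by auto
          qed
        qed
        then show ?thesis using injc by (auto simp: bij_betw_def inj_on_def inj_def)
      qed
      have "p permutes A"
        by (rule bij_imp_permutes) (auto simp: p_def intro: bij_betw_cong[THEN iffD1, OF _ bijA])
      moreover have "q permutes B"
        by (rule bij_imp_permutes) (auto simp: q_def intro: bij_betw_cong[THEN iffD1, OF _ bijB])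
      moreover have "\<forall>i\<in>A. key (p i) = key i" using ck by (auto simp: p_def)
      moreover have "\<forall>i\<in>B. key (q i) = key i" using ck by (auto simp: q_def)
      moreover have "c = p \<circ> q"
      proof
        fix i show "c i = (p \<circ> q) i"
          using mapsB disj cp by (auto simp: p_def q_def permutes_not_in)
      qed
      ultimately show "c \<in> ?f ` (Cset key A \<times> Cset key B)"
        unfolding Cset_def by force
    qed
  qed
  have inj: "inj_on ?f (Cset key A \<times> Cset key B)"
  proof (rule inj_onI, clarify)
    fix p q p' q'
    assume p: "p \<in> Cset key A" and q: "q \<in> Cset key B" and p': "p' \<in> Cset key A" and q': "q' \<in> Cset key B"
      and eq: "p \<circ> q = p' \<circ> q'"
    have pA: "p permutes A" "p' permutes A" "q permutes B" "q' permutes B"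
      using p q p' q' unfolding Cset_def by auto
    have "p = p'"
    proof
      fix i show "p i = p' i"
      proof (cases "i \<in> A")
        case True
        then have "i \<notin> B" using disj by auto
        then have "q i = i" "q' i = i" using pA by (simp_all add: permutes_not_in)
        then show ?thesis using fun_cong[OF eq, of i] by simp
      next
        case False then show ?thesis using pA by (simp add: permutes_not_in)
      qed
    qed
    moreover have "q = q'"
    proof
      fix i show "q i = q' i"
      proof (cases "i \<in> B")
        case True
        then have "q i \<in> B" "q' i \<in> B" using pA by (simp_all add: permutes_in_image)
        then have "q i \<notin> A" "q' i \<notin> A" using disj by auto
        then have "p (q i) = q i" "p' (q' i) = q' i" using pA by (simp_all add: permutes_not_in)
        then show ?thesis using fun_cong[OF eq, of i] by simp
      next
        case False then show ?thesis using pA by (simp add: permutes_not_in)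
      qed
    qed
    ultimately show "p = p' \<and> q = q'" by simp
  qed
  have "sum h (Cset key (A \<union> B)) = sum (h \<circ> ?f) (Cset key A \<times> Cset key B)"
    unfolding img by (rule sum.reindex[OF inj])
  also have "\<dots> = (\<Sum>p\<in>Cset key A. \<Sum>q\<in>Cset key B. h (p \<circ> q))"
    by (simp add: sum.cartesian_product split_def)
  finally show ?thesis .
qed





definition Gm :: "(nat \<Rightarrow> 'k) \<Rightarrow> (nat \<Rightarrow> ('a::comm_ring_1) mat3) \<Rightarrow> nat list \<Rightarrow> 'a mat3" where
  "Gm key s L = (\<lambda>i j. \<Sum>p\<in>Cset key (set L). of_int (sign p) * mprod (map (s \<circ> p) L) i j)"

lemma Cset_perm: "p \<in> Cset key S \<Longrightarrow> p permutes S"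
  by (simp add: Cset_def)

lemma Gm_append:
  assumes dist: "distinct (L1 @ L2)"
    and kd: "\<And>a b. a \<in> set L1 \<Longrightarrow> b \<in> set L2 \<Longrightarrow> key a \<noteq> key b"
    and sM: "\<And>x. s x \<in> M3"
  shows "Gm key s (L1 @ L2) = mmul (Gm key s L1) (Gm key s L2)"
proof (rule ext, rule ext)
  fix i j
  have disj: "set L1 \<inter> set L2 = {}" using dist by auto
  have sm: "set (map f L) \<subseteq> M3" if "\<And>x. f x \<in> M3" for f L using that by auto
  have "Gm key s (L1 @ L2) i j = (\<Sum>p\<in>Cset key (set L1). \<Sum>q\<in>Cset key (set L2).
      of_int (sign (p \<circ> q)) * mprod (map (s \<circ> (p \<circ> q)) (L1 @ L2)) i j)"
    unfolding Gm_def set_append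
    by (rule Cset_split[where h = "\<lambda>p. of_int (sign p) * mprod (map (s \<circ> p) (L1 @ L2)) i j"])
       (use disj kd in auto)
  also have "\<dots> = (\<Sum>p\<in>Cset key (set L1). \<Sum>q\<in>Cset key (set L2).
      (\<Sum>k<3. (of_int (sign p) * mprod (map (s \<circ> p) L1) i k) * (of_int (sign q) * mprod (map (s \<circ> q) L2) k j)))"
  proof (intro sum.cong refl)
    fix p q assume p: "p \<in> Cset key (set L1)" and q: "q \<in> Cset key (set L2)"
    have pp: "p permutes set L1" and qp: "q permutes set L2" using p q by (auto dest: Cset_perm)
    have e1: "map (s \<circ> (p \<circ> q)) L1 = map (s \<circ> p) L1"
    proof (rule map_cong[OF refl])
      fix x assume "x \<in> set L1"
      then have "x \<notin> set L2" using disj by auto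
      then show "(s \<circ> (p \<circ> q)) x = (s \<circ> p) x" using qp by (simp add: permutes_not_in)
    qed
    have e2: "map (s \<circ> (p \<circ> q)) L2 = map (s \<circ> q) L2"
    proof (rule map_cong[OF refl])
      fix x assume "x \<in> set L2"
      then have "q x \<in> set L2" using qp by (simp add: permutes_in_image)
      then have "q x \<notin> set L1" using disj by auto
      then show "(s \<circ> (p \<circ> q)) x = (s \<circ> q) x" using pp by (simp add: permutes_not_in)
    qed
    have sgn: "sign (p \<circ> q) = sign p * sign q"
      by (rule sign_compose) (use pp qp permutation_permutes in auto)
    have "map (s \<circ> (p \<circ> q)) (L1 @ L2) = map (s \<circ> p) L1 @ map (s \<circ> q) L2" by (simp only: map_append e1 e2)
    then have "mprod (map (s \<circ> (p \<circ> q)) (L1 @ L2)) = mmul (mprod (map (s \<circ> p) L1)) (mprod (map (s \<circ> q) L2))"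
      by (simp only:) (rule mprod_append; use sM in auto)
    then show "of_int (sign (p \<circ> q)) * mprod (map (s \<circ> (p \<circ> q)) (L1 @ L2)) i j =
      (\<Sum>k<3. (of_int (sign p) * mprod (map (s \<circ> p) L1) i k) * (of_int (sign q) * mprod (map (s \<circ> q) L2) k j))"
      by (simp add: sgn mmul_def sum_distrib_left mult_ac)
  qed
  also have "\<dots> = (\<Sum>k<3. (\<Sum>p\<in>Cset key (set L1). of_int (sign p) * mprod (map (s \<circ> p) L1) i k) *
                         (\<Sum>q\<in>Cset key (set L2). of_int (sign q) * mprod (map (s \<circ> q) L2) k j))"
  proof -
    let ?a = "\<lambda>p k. of_int (sign p) * mprod (map (s \<circ> p) L1) i k"
    let ?b = "\<lambda>q k. of_int (sign q) * mprod (map (s \<circ> q) L2) k j"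
    have "(\<Sum>k<3. (\<Sum>p\<in>Cset key (set L1). ?a p k) * (\<Sum>q\<in>Cset key (set L2). ?b q k))
        = (\<Sum>k<3. \<Sum>p\<in>Cset key (set L1). \<Sum>q\<in>Cset key (set L2). ?a p k * ?b q k)"
      by (simp only: sum_product)
    also have "\<dots> = (\<Sum>p\<in>Cset key (set L1). \<Sum>k<3. \<Sum>q\<in>Cset key (set L2). ?a p k * ?b q k)"
      by (rule sum.swap)
    also have "\<dots> = (\<Sum>p\<in>Cset key (set L1). \<Sum>q\<in>Cset key (set L2). \<Sum>k<3. ?a p k * ?b q k)"
      by (intro sum.cong refl) (rule sum.swap)
    finally show ?thesis by simp
  qed
  also have "\<dots> = mmul (Gm key s L1) (Gm key s L2) i j"
    by (simp add: mmul_def Gm_def)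
  finally show "Gm key s (L1 @ L2) i j = mmul (Gm key s L1) (Gm key s L2) i j" .
qed

lemma Cset_empty: "Cset key {} = {id}"
  by (auto simp: Cset_def)

lemma Gm_Nil: "Gm key s [] = mone"
  by (simp add: Gm_def Cset_empty)

lemma Gm_concat:
  assumes "distinct (concat Ls)"
    and "\<And>L x. L \<in> set Ls \<Longrightarrow> x \<in> set L \<Longrightarrow> key x = kk L"
    and "distinct (map kk Ls)"
    and sM: "\<And>x. s x \<in> M3"
  shows "Gm key s (concat Ls) = mprod (map (Gm key s) Ls)"
  using assms(1-3)
proof (induction Ls)
  case Nil then show ?case by (simp add: Gm_Nil)
next
  case (Cons L Ls)
  have "Gm key s (L @ concat Ls) = mmul (Gm key s L) (Gm key s (concat Ls))"
  proof (rule Gm_append[OF _ _ sM])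
    show "distinct (L @ concat Ls)" using Cons.prems by simp
    fix a b assume a: "a \<in> set L" and b: "b \<in> set (concat Ls)"
    then obtain L' where L': "L' \<in> set Ls" "b \<in> set L'" by auto
    have "key a = kk L" using Cons.prems(2) a by simp
    moreover have "key b = kk L'" using Cons.prems(2) L' by simp
    moreover have "kk L \<noteq> kk L'" using Cons.prems(3) L' by auto
    ultimately show "key a \<noteq> key b" by simp
  qed
  moreover have "Gm key s (concat Ls) = mprod (map (Gm key s) Ls)"
    using Cons.prems by (intro Cons.IH) auto
  ultimately show ?case by simp
qed

lemma Cset_const: "(\<And>x. x \<in> S \<Longrightarrow> key x = c) \<Longrightarrow> Cset key S = {p. p permutes S}"
  by (auto simp: Cset_def permutes_in_image)

lemma Gm_single: "s a \<in> M3 \<Longrightarrow> Gm key s [a] = s a"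
proof -
  assume "s a \<in> M3"
  have "Cset key {a} = {id}" by (auto simp: Cset_def)
  then show ?thesis using \<open>s a \<in> M3\<close> by (simp add: Gm_def mmul_mone_right)
qed

lemma Gm_pair:
  assumes "a \<noteq> b" "key a = key b" and sM: "\<And>x. s x \<in> M3"
  shows "Gm key s [a, b] = (\<lambda>i j. mmul (s a) (s b) i j - mmul (s b) (s a) i j)"
proof -
  have C0: "Cset key (set [a,b]) = {p. p permutes set [a,b]}"
    by (rule Cset_const[where c = "key a"]) (use assms in auto)
  have C: "Cset key (set [a,b]) = {p. p permutes insert a {b}}" using C0 by simp
  show ?thesis
    unfolding Gm_def C
    by (subst sum_over_permutations_insert) (use assms in \<open>auto simp: sign_compose permutation_swap_id mmul_mone_right sign_swap_id\<close>)
qed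

definition St3 :: "('a::comm_ring_1) mat3 \<Rightarrow> 'a mat3 \<Rightarrow> 'a mat3 \<Rightarrow> 'a mat3" where
  "St3 X Y Z = (\<lambda>i j. mmul X (mmul Y Z) i j - mmul X (mmul Z Y) i j - mmul Y (mmul X Z) i j
      + mmul Y (mmul Z X) i j + mmul Z (mmul X Y) i j - mmul Z (mmul Y X) i j)"

lemma Gm_triple:
  assumes "distinct [a, b, c]" "key a = key b" "key a = key c" and sM: "\<And>x. s x \<in> M3"
  shows "Gm key s [a, b, c] = St3 (s a) (s b) (s c)"
proof -
  have C0: "Cset key (set [a,b,c]) = {p. p permutes set [a,b,c]}"
    by (rule Cset_const[where c = "key a"]) (use assms in auto)
  have C: "Cset key (set [a,b,c]) = {p. p permutes insert a (insert b {c})}" using C0 by simp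
  have sM': "\<And>x y. mmul (s x) (s y) \<in> M3" by (simp add: mmul_M3 sM)
  show ?thesis
    unfolding Gm_def C St3_def
    apply (subst sum_over_permutations_insert)
      apply (use assms in simp)
     apply (use assms in simp)
    apply (subst sum_over_permutations_insert)
      apply simp
     apply (use assms in simp)
    using assms
    apply (simp add: sign_compose permutation_swap_id mmul_mone_right sM sM' permutation_compose sign_swap_id)
    apply (simp add: transpose_def fun_eq_iff algebra_simps)
    done
qed





lemma sum_take_le: "m \<le> n \<Longrightarrow> sum_list (take m xs) \<le> sum_list (take n (xs::nat list))"
proof -
  assume "m \<le> n"
  then obtain d where "n = m + d" by (metis le_add_diff_inverse)
  then show ?thesis by (simp add: take_add)
qed

lemma sum_take_Suc: "r < length la \<Longrightarrow> sum_list (take (Suc r) la) = sum_list (take r la) + (la ! r :: nat)"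
  by (simp add: take_Suc_conv_app_nth)

lemma sum_take_all: "sum_list (take n la) \<le> sum_list (la :: nat list)"
  by (metis sum_take_le nat_le_linear take_all order_refl)

lemma rowof_cell:
  assumes "r < length la" "c < la ! r"
  shows "rowof la (sum_list (take r la) + c) = r"
  unfolding rowof_def
proof (rule Least_equality)
  show "sum_list (take r la) + c < sum_list (take (Suc r) la)" using assms by (simp add: sum_take_Suc)
next
  fix y assume y: "sum_list (take r la) + c < sum_list (take (Suc y) la)"
  show "r \<le> y"
  proof (rule ccontr)
    assume "\<not> r \<le> y"
    then have "Suc y \<le> r" by simp
    then have "sum_list (take (Suc y) la) \<le> sum_list (take r la)" by (rule sum_take_le)
    then show False using y by simp
  qed
qed

lemma colof_cell:
  assumes "r < length la" "c < la ! r"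
  shows "colof la (sum_list (take r la) + c) = c"
  using assms by (simp add: colof_def rowof_cell)

lemma sizes_nth: "k < length mp \<Longrightarrow> sizes mp ! k = sum_list (mp ! k)"
  by (simp add: sizes_def)

lemma offs_Suc: "k < length mp \<Longrightarrow> offs mp (Suc k) = offs mp k + sum_list (mp ! k)"
  by (simp add: offs_def take_Suc_conv_app_nth sizes_def)

lemma offs_mono: "k \<le> k' \<Longrightarrow> offs mp k \<le> offs mp k'"
  unfolding offs_def by (rule sum_take_le)

lemma offs_total: "offs mp (length mp) = total mp"
  by (simp add: offs_def total_def sizes_def)

lemma blockof_cell:
  assumes "k < length mp" "t < sum_list (mp ! k)"
  shows "blockof mp (offs mp k + t) = k"
  unfolding blockof_def
proof (rule Least_equality)
  show "offs mp k + t < offs mp (Suc k)" using assms by (simp add: offs_Suc)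
next
  fix y assume y: "offs mp k + t < offs mp (Suc y)"
  show "k \<le> y"
  proof (rule ccontr)
    assume "\<not> k \<le> y"
    then have "Suc y \<le> k" by simp
    then have "offs mp (Suc y) \<le> offs mp k" by (rule offs_mono)
    then show False using y by simp
  qed
qed

definition cell :: "nat list list \<Rightarrow> nat \<Rightarrow> nat \<Rightarrow> nat \<Rightarrow> nat" where
  "cell mp k r c = offs mp k + sum_list (take r (mp ! k)) + c"

definition valid :: "nat list list \<Rightarrow> nat \<Rightarrow> nat \<Rightarrow> nat \<Rightarrow> bool" where
  "valid mp k r c \<longleftrightarrow> k < length mp \<and> r < length (mp ! k) \<and> c < mp ! k ! r"

lemma valid_t: "valid mp k r c \<Longrightarrow> sum_list (take r (mp ! k)) + c < sum_list (mp ! k)"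
  unfolding valid_def
  by (metis add_less_cancel_left sum_take_Suc sum_take_all order_less_le_trans)

lemma rowkey_cell: "valid mp k r c \<Longrightarrow> rowkey mp (cell mp k r c) = (k, r)"
  using valid_t[of mp k r c]
  by (auto simp: rowkey_def cell_def blockof_cell[unfolded add.assoc] add.assoc valid_def rowof_cell)

lemma colkey_cell: "valid mp k r c \<Longrightarrow> colkey mp (cell mp k r c) = (k, c)"
  using valid_t[of mp k r c]
  by (auto simp: colkey_def cell_def blockof_cell[unfolded add.assoc] add.assoc valid_def colof_cell)

lemma cell_lt_total: "valid mp k r c \<Longrightarrow> cell mp k r c < total mp"
proof -
  assume v: "valid mp k r c"
  then have "cell mp k r c < offs mp (Suc k)"
    using valid_t[OF v] by (simp add: cell_def offs_Suc valid_def)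
  also have "\<dots> \<le> offs mp (length mp)" using v by (intro offs_mono) (simp add: valid_def)
  finally show ?thesis by (simp add: offs_total)
qed

lemma cell_inj:
  assumes "valid mp k r c" "valid mp k' r' c'" "cell mp k r c = cell mp k' r' c'"
  shows "k = k' \<and> r = r' \<and> c = c'"
  using rowkey_cell[OF assms(1)] rowkey_cell[OF assms(2)] colkey_cell[OF assms(1)] colkey_cell[OF assms(2)] assms(3)
  by auto

lemma cell_surj:
  assumes "i < total mp"
  shows "\<exists>k r c. valid mp k r c \<and> i = cell mp k r c"
proof -
  let ?k = "blockof mp i"
  have ex: "\<exists>k. i < offs mp (Suc k)"
  proof -
    have "i < offs mp (length mp)" using assms by (simp add: offs_total)
    moreover have "offs mp (length mp) \<le> offs mp (Suc (length mp))" by (rule offs_mono) simp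
    ultimately show ?thesis by (intro exI[of _ "length mp"]) simp
  qed
  have k1: "i < offs mp (Suc ?k)" unfolding blockof_def by (rule LeastI_ex[OF ex])
  have k2: "offs mp ?k \<le> i"
  proof (cases ?k)
    case 0 then show ?thesis by (simp add: offs_def)
  next
    case (Suc k')
    have "\<not> i < offs mp (Suc k')"
      using not_less_Least[of k' "\<lambda>k. i < offs mp (Suc k)"] Suc unfolding blockof_def by simp
    then show ?thesis using Suc by simp
  qed
  have klen: "?k < length mp"
  proof (rule ccontr)
    assume "\<not> ?k < length mp"
    then have "offs mp (length mp) \<le> offs mp ?k" by (intro offs_mono) simp
    then show False using k2 assms by (simp add: offs_total)
  qed
  define la where "la = mp ! ?k"
  define t where "t = i - offs mp ?k"
  have tlt: "t < sum_list la" using k1 k2 klen by (simp add: t_def la_def offs_Suc)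
  let ?r = "rowof la t"
  have ex2: "\<exists>r. t < sum_list (take (Suc r) la)"
    using tlt by (intro exI[of _ "length la"]) simp
  have r1: "t < sum_list (take (Suc ?r) la)" unfolding rowof_def by (rule LeastI_ex[OF ex2])
  have r2: "sum_list (take ?r la) \<le> t"
  proof (cases ?r)
    case 0 then show ?thesis by simp
  next
    case (Suc r')
    have "\<not> t < sum_list (take (Suc r') la)"
      using not_less_Least[of r' "\<lambda>r. t < sum_list (take (Suc r) la)"] Suc unfolding rowof_def by simp
    then show ?thesis using Suc by simp
  qed
  have rlen: "?r < length la"
  proof (rule ccontr)
    assume "\<not> ?r < length la"
    then have "take ?r la = la" by simp
    then show False using r2 tlt by simp
  qed
  define c where "c = t - sum_list (take ?r la)"
  have clt: "c < la ! ?r" using r1 r2 rlen by (simp add: c_def sum_take_Suc)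
  have "valid mp ?k ?r c" using klen rlen clt by (simp add: valid_def la_def)
  moreover have "i = cell mp ?k ?r c" using k2 r2 by (simp add: cell_def c_def t_def la_def)
  ultimately show ?thesis by blast
qed

lemma mkpart_tw: "sorted_wrt (\<ge>) xs \<Longrightarrow> mkpart xs = takeWhile (\<lambda>x. 0 < x) xs"
proof (induction xs)
  case Nil then show ?case by (simp add: mkpart_def)
next
  case (Cons x xs)
  show ?case
  proof (cases "0 < x")
    case True then show ?thesis using Cons by (simp add: mkpart_def)
  next
    case False
    then have "\<forall>y\<in>set xs. y = 0" using Cons.prems by auto
    then have "filter (\<lambda>x. 0 < x) xs = []" by (simp add: filter_empty_conv)
    then show ?thesis using False by (simp add: mkpart_def)
  qed
qed

lemma sum_mkpart: "sum_list (mkpart xs) = sum_list (xs::nat list)"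
  by (induction xs) (auto simp: mkpart_def)

lemma valid_mkpart:
  assumes "sorted_wrt (\<ge>) xs"
  shows "(r < length (mkpart xs) \<and> c < mkpart xs ! r) \<longleftrightarrow> (r < length xs \<and> c < xs ! r)"
proof -
  let ?t = "takeWhile (\<lambda>x. 0 < x) xs"
  have m: "mkpart xs = ?t" using assms by (rule mkpart_tw)
  have lt: "length ?t \<le> length xs" by (rule length_takeWhile_le)
  show ?thesis
  proof
    assume "r < length (mkpart xs) \<and> c < mkpart xs ! r"
    then show "r < length xs \<and> c < xs ! r" using m lt by (auto simp: takeWhile_nth)
  next
    assume a: "r < length xs \<and> c < xs ! r"
    have "r < length ?t"
    proof (rule ccontr)
      assume "\<not> r < length ?t"
      then have l: "length ?t < length xs" using a by simp
      then have "\<not> 0 < xs ! length ?t" by (rule nth_length_takeWhile)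
      moreover have "xs ! r \<le> xs ! length ?t"
        using assms a \<open>\<not> r < length ?t\<close> by (cases "length ?t = r") (auto simp: sorted_wrt_iff_nth_less)
      ultimately show False using a by simp
    qed
    then show "r < length (mkpart xs) \<and> c < mkpart xs ! r" using m a by (simp add: takeWhile_nth)
  qed
qed

lemma nth_mkpart: "sorted_wrt (\<ge>) xs \<Longrightarrow> r < length (mkpart xs) \<Longrightarrow> mkpart xs ! r = xs ! r"
  by (simp add: mkpart_tw takeWhile_nth)





lemma vs_fscale: "vector_space (fscale :: 'a::field \<Rightarrow> (nat list \<Rightarrow> 'a) \<Rightarrow> _)"
  unfolding vector_space_def fscale_def by (auto simp: fun_eq_iff algebra_simps)

interpretation fv: vector_space "fscale :: 'a::field \<Rightarrow> (nat list \<Rightarrow> 'a) \<Rightarrow> _"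
  by (rule vs_fscale)

lemma sum_fun_apply: "(sum f A) x = (\<Sum>a\<in>A. f a x)"
  by (induction A rule: infinite_finite_induct) auto

lemma finite_mlwords: "finite (mlwords n)"
proof -
  have "mlwords n \<subseteq> {xs. set xs \<subseteq> {0..<n} \<and> length xs = n}"
    by (auto simp: mlwords_def distinct_card[symmetric])
  then show ?thesis by (rule finite_subset) (rule finite_lists_length_eq, simp)
qed

definition delta :: "nat list \<Rightarrow> nat list \<Rightarrow> 'a::field" where
  "delta w0 = (\<lambda>w. if w = w0 then 1 else 0)"

lemma Pn_span: "Pn n \<subseteq> fv.span (delta ` mlwords n :: (nat list \<Rightarrow> 'a::field) set)"
proof
  fix f :: "nat list \<Rightarrow> 'a" assume f: "f \<in> Pn n"
  have "f = (\<Sum>w\<in>mlwords n. fscale (f w) (delta w))"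
  proof
    fix x
    show "f x = (\<Sum>w\<in>mlwords n. fscale (f w) (delta w)) x"
      unfolding sum_fun_apply using f finite_mlwords[of n]
      by (auto simp: fscale_def delta_def Pn_def if_distrib cong: if_cong)
  qed
  also have "\<dots> \<in> fv.span (delta ` mlwords n)"
    by (intro fv.span_sum fv.span_scale fv.span_base) auto
  finally show "f \<in> fv.span (delta ` mlwords n)" .
qed

lemma map_perm_mlwords:
  assumes "g permutes {0..<n}" "w \<in> mlwords n"
  shows "map g w \<in> mlwords n"
proof -
  have "inj g" using assms(1) by (rule permutes_inj)
  then have "distinct (map g w)" using assms(2) by (auto simp: mlwords_def distinct_map inj_on_def inj_def)
  moreover have "set (map g w) = {0..<n}" using assms permutes_image[OF assms(1)] by (simp add: mlwords_def)
  ultimately show ?thesis by (simp add: mlwords_def)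
qed

lemma youngsym_Pn:
  fixes f :: "nat list \<Rightarrow> 'a::comm_ring_1"
  assumes f: "f \<in> Pn (total mp)"
  shows "youngsym mp f \<in> Pn (total mp)"
  unfolding Pn_def
proof (clarify)
  fix w assume "youngsym mp f w \<noteq> 0"
  then obtain r c where r: "r \<in> rowstab mp" and c: "c \<in> colstab mp"
    and nz: "of_int (sign c) * pact (r \<circ> c) f w \<noteq> 0"
    unfolding youngsym_def by (meson sum.not_neutral_contains_not_neutral)
  have g: "r \<circ> c permutes {0..<total mp}"
    using r c by (auto simp: rowstab_def colstab_def intro: permutes_compose)
  have "f (map (inv (r \<circ> c)) w) \<noteq> 0" using nz by (auto simp: pact_def)
  then have "map (inv (r \<circ> c)) w \<in> mlwords (total mp)" using f by (simp add: Pn_def)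
  then have "map (r \<circ> c) (map (inv (r \<circ> c)) w) \<in> mlwords (total mp)" by (rule map_perm_mlwords[OF g])
  moreover have "map (r \<circ> c) (map (inv (r \<circ> c)) w) = w"
    unfolding map_map by (rule map_idI) (metis comp_apply permutes_inverses(1)[OF g])
  ultimately show "w \<in> mlwords (total mp)" by simp
qed

lemma IdP_subspace: "fv.subspace (IdP mp :: (nat list \<Rightarrow> 'a::field) set)"
  unfolding fv.subspace_def
proof (intro conjI ballI allI)
  show "0 \<in> (IdP mp :: (nat list \<Rightarrow> 'a) set)"
    by (auto simp: IdP_def Pn_def evalp_def mzero_def)
next
  fix f g :: "nat list \<Rightarrow> 'a" assume f: "f \<in> IdP mp" and g: "g \<in> IdP mp"
  show "f + g \<in> IdP mp"
    using f g unfolding IdP_def Pn_def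
  proof (clarsimp, intro conjI allI impI)
    fix w assume "f w + g w \<noteq> 0" "\<forall>w. f w \<noteq> 0 \<longrightarrow> w \<in> mlwords (total mp)" "\<forall>w. g w \<noteq> 0 \<longrightarrow> w \<in> mlwords (total mp)"
    then show "w \<in> mlwords (total mp)" by (metis add.right_neutral)
  next
    fix s :: "nat \<Rightarrow> 'a mat3" assume a: "admissible mp s"
      "\<forall>s. admissible mp s \<longrightarrow> evalp f s (total mp) = mzero"
      "\<forall>s. admissible mp s \<longrightarrow> evalp g s (total mp) = mzero"
    then have "evalp f s (total mp) = mzero" "evalp g s (total mp) = mzero" by auto
    then show "evalp (f + g) s (total mp) = mzero"
      by (auto simp: evalp_def mzero_def fun_eq_iff distrib_right sum.distrib)
  qed
next
  fix c :: 'a and f :: "nat list \<Rightarrow> 'a" assume f: "f \<in> IdP mp"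
  show "fscale c f \<in> IdP mp"
    using f unfolding IdP_def Pn_def
  proof (clarsimp, intro conjI allI impI)
    fix w assume "fscale c f w \<noteq> 0" "\<forall>w. f w \<noteq> 0 \<longrightarrow> w \<in> mlwords (total mp)"
    then show "w \<in> mlwords (total mp)" by (auto simp: fscale_def)
  next
    fix s :: "nat \<Rightarrow> 'a mat3" assume a: "admissible mp s" "\<forall>s. admissible mp s \<longrightarrow> evalp f s (total mp) = mzero"
    then have "evalp f s (total mp) = mzero" by auto
    then have "\<And>i j. (\<Sum>w\<in>mlwords (total mp). f w * mprod (map s w) i j) = 0"
      by (auto simp: evalp_def mzero_def fun_eq_iff)
    then show "evalp (fscale c f) s (total mp) = mzero"
      by (auto simp: evalp_def mzero_def fun_eq_iff fscale_def mult.assoc sum_distrib_left[symmetric])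
  qed
qed

lemma mult_pos:
  fixes F :: "'a::field_char_0 itself"
  assumes y: "y \<in> youngsym mp ` (Pn (total mp) :: (nat list \<Rightarrow> 'a) set)" and yI: "y \<notin> IdP mp"
  shows "mult F mp \<noteq> 0"
proof -
  let ?n = "total mp"
  let ?I = "IdP mp :: (nat list \<Rightarrow> 'a) set"
  let ?Y = "youngsym mp ` (Pn ?n :: (nat list \<Rightarrow> 'a) set)"
  let ?T = "delta ` mlwords ?n :: (nat list \<Rightarrow> 'a) set"
  have finT: "finite ?T" by (simp add: finite_mlwords)
  have IP: "?I \<subseteq> Pn ?n" by (auto simp: IdP_def)
  have YP: "?Y \<subseteq> Pn ?n" using youngsym_Pn by blast
  have YIT: "?Y \<union> ?I \<subseteq> fv.span ?T" using IP YP Pn_span by blast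
  obtain B where B: "B \<subseteq> ?I" "fv.independent B" "?I \<subseteq> fv.span B" "card B = fv.dim ?I"
    by (rule fv.basis_exists)
  have finB: "finite B"
    using fv.independent_span_bound[OF finT B(2)] B(1) IP Pn_span by blast
  have "fv.span B \<subseteq> ?I" using B(1) IdP_subspace by (rule fv.span_minimal)
  then have ynB: "y \<notin> fv.span B" using yI by blast
  have indep: "fv.independent (insert y B)" by (rule fv.independent_insertI[OF ynB B(2)])
  have sub: "insert y B \<subseteq> ?Y \<union> ?I" using y B(1) by blast
  obtain B2 where B2: "insert y B \<subseteq> B2" "B2 \<subseteq> ?Y \<union> ?I" "fv.independent B2" "?Y \<union> ?I \<subseteq> fv.span B2"
    by (rule fv.maximal_independent_subset_extend[OF sub indep])
  have finB2: "finite B2"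
    using fv.independent_span_bound[OF finT B2(3)] B2(2) YIT by blast
  have "card B2 = fv.dim (?Y \<union> ?I)" by (rule fv.basis_card_eq_dim[OF B2(2) B2(4) B2(3)])
  moreover have "card (insert y B) \<le> card B2" by (rule card_mono[OF finB2 B2(1)])
  moreover have "y \<notin> B" using ynB fv.span_base[of y B] by blast
  then have "card (insert y B) = card B + 1"
    using finB by simp
  ultimately have "fv.dim ?I < fv.dim (?Y \<union> ?I)" using B(4) by linarith
  then show ?thesis
    by (simp add: mult_def fdim_def fspan_def)
qed





lemma delta_Pn: "w0 \<in> mlwords n \<Longrightarrow> (delta w0 :: nat list \<Rightarrow> 'a::field) \<in> Pn n"
  by (simp add: Pn_def delta_def)

lemma rowstab_perm: "r \<in> rowstab mp \<Longrightarrow> r permutes {0..<total mp}"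
  by (simp add: rowstab_def)

lemma colstab_perm: "c \<in> colstab mp \<Longrightarrow> c permutes {0..<total mp}"
  by (simp add: colstab_def)

lemma eval_youngsym_delta:
  fixes s :: "nat \<Rightarrow> ('a::field) mat3"
  assumes w0: "w0 \<in> mlwords (total mp)"
  shows "evalp (youngsym mp (delta w0)) s (total mp) i j =
    (\<Sum>r\<in>rowstab mp. \<Sum>c\<in>colstab mp. of_int (sign c) * mprod (map (s \<circ> (r \<circ> c)) w0) i j)"
proof -
  let ?n = "total mp"
  have inner: "(\<Sum>w\<in>mlwords ?n. delta w0 (map (inv g) w) * mprod (map s w) i j) = mprod (map (s \<circ> g) w0) i j"
    if g: "g permutes {0..<?n}" for g
  proof -
    have iff: "map (inv g) w = w0 \<longleftrightarrow> w = map g w0" for w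
    proof
      assume "map (inv g) w = w0"
      then have "map g (map (inv g) w) = map g w0" by simp
      moreover have "map g (map (inv g) w) = w"
        unfolding map_map by (rule map_idI) (metis comp_apply permutes_inverses(1)[OF g])
      ultimately show "w = map g w0" by simp
    next
      assume "w = map g w0"
      then show "map (inv g) w = w0"
        by (simp add: comp_def permutes_inverses(2)[OF g])
    qed
    have mem: "map g w0 \<in> mlwords ?n" by (rule map_perm_mlwords[OF g w0])
    have "(\<Sum>w\<in>mlwords ?n. delta w0 (map (inv g) w) * mprod (map s w) i j)
        = (\<Sum>w\<in>mlwords ?n. if w = map g w0 then mprod (map s w) i j else 0)"
      by (intro sum.cong refl) (simp add: delta_def iff)
    also have "\<dots> = mprod (map s (map g w0)) i j"
      using mem finite_mlwords by simp
    finally show ?thesis by simp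
  qed
  have "evalp (youngsym mp (delta w0)) s ?n i j =
      (\<Sum>w\<in>mlwords ?n. \<Sum>r\<in>rowstab mp. \<Sum>c\<in>colstab mp.
         of_int (sign c) * (delta w0 (map (inv (r \<circ> c)) w) * mprod (map s w) i j))"
    by (simp add: evalp_def youngsym_def pact_def sum_distrib_right mult.assoc)
  also have "\<dots> = (\<Sum>r\<in>rowstab mp. \<Sum>c\<in>colstab mp. \<Sum>w\<in>mlwords ?n.
         of_int (sign c) * (delta w0 (map (inv (r \<circ> c)) w) * mprod (map s w) i j))"
    by (subst sum.swap) (intro sum.cong refl, rule sum.swap)
  also have "\<dots> = (\<Sum>r\<in>rowstab mp. \<Sum>c\<in>colstab mp. of_int (sign c) * mprod (map (s \<circ> (r \<circ> c)) w0) i j)"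
  proof (intro sum.cong refl)
    fix r c assume r: "r \<in> rowstab mp" and c: "c \<in> colstab mp"
    have g: "r \<circ> c permutes {0..<?n}"
      using rowstab_perm[OF r] colstab_perm[OF c] by (rule permutes_compose[rotated])
    show "(\<Sum>w\<in>mlwords ?n. of_int (sign c) * (delta w0 (map (inv (r \<circ> c)) w) * mprod (map s w) i j))
        = of_int (sign c) * mprod (map (s \<circ> (r \<circ> c)) w0) i j"
      by (simp add: sum_distrib_left[symmetric] inner[OF g])
  qed
  finally show ?thesis .
qed

lemma rowconst:
  assumes r: "r \<in> rowstab mp" and s: "s = V \<circ> rowkey mp"
  shows "s \<circ> (r \<circ> c) = s \<circ> c"
proof
  fix x
  show "(s \<circ> (r \<circ> c)) x = (s \<circ> c) x"
  proof (cases "c x < total mp")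
    case True
    then show ?thesis using r s by (simp add: rowstab_def)
  next
    case False
    then have "r (c x) = c x" using rowstab_perm[OF r] by (simp add: permutes_not_in)
    then show ?thesis by simp
  qed
qed

lemma finite_rowstab: "finite (rowstab mp)"
  by (rule finite_subset[OF _ finite_permutations[of "{0..<total mp}"]]) (auto simp: rowstab_def)

lemma id_rowstab: "id \<in> rowstab mp"
  by (simp add: rowstab_def)

lemma colstab_Cset: "colstab mp = Cset (colkey mp) {0..<total mp}"
  by (auto simp: colstab_def Cset_def)

lemma reduce_main:
  fixes F :: "'a::field_char_0 itself" and V :: "nat \<times> nat \<Rightarrow> 'a mat3"
  assumes w0: "w0 \<in> mlwords (total mp)"
    and adm: "\<And>k r. V (k, r) \<in> part k"
    and nz: "(\<Sum>c\<in>Cset (colkey mp) {0..<total mp}. of_int (sign c) * mprod (map (V \<circ> rowkey mp \<circ> c) w0) i j) \<noteq> 0"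
  shows "mult F mp \<noteq> 0"
proof (rule mult_pos)
  let ?s = "V \<circ> rowkey mp"
  show "youngsym mp (delta w0 :: nat list \<Rightarrow> 'a) \<in> youngsym mp ` (Pn (total mp) :: (nat list \<Rightarrow> 'a) set)"
    using delta_Pn[OF w0] by blast
  have admis: "admissible mp ?s"
    unfolding admissible_def
  proof (intro allI impI)
    fix x assume "x < total mp"
    show "?s x \<in> part (blockof mp x)"
      using adm[of "blockof mp x" "rowof (mp ! blockof mp x) (x - offs mp (blockof mp x))"]
      by (simp add: rowkey_def Let_def)
  qed
  have "evalp (youngsym mp (delta w0 :: nat list \<Rightarrow> 'a)) ?s (total mp) i j =
      (\<Sum>r\<in>rowstab mp. \<Sum>c\<in>colstab mp. of_int (sign c) * mprod (map (?s \<circ> c) w0) i j)"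
    unfolding eval_youngsym_delta[OF w0]
  proof (intro sum.cong refl)
    fix r c :: "nat \<Rightarrow> nat" assume "r \<in> rowstab mp"
    then have "?s \<circ> (r \<circ> c) = ?s \<circ> c" by (rule rowconst) simp
    then show "of_int (sign c) * mprod (map (?s \<circ> (r \<circ> c)) w0) i j = of_int (sign c) * mprod (map (?s \<circ> c) w0) i j"
      by simp
  qed
  also have "\<dots> = of_nat (card (rowstab mp)) * (\<Sum>c\<in>Cset (colkey mp) {0..<total mp}. of_int (sign c) * mprod (map (?s \<circ> c) w0) i j)"
    by (simp add: colstab_Cset)
  finally have ev: "evalp (youngsym mp (delta w0 :: nat list \<Rightarrow> 'a)) ?s (total mp) i j = \<dots>" .
  have "card (rowstab mp) \<noteq> 0" using finite_rowstab id_rowstab by (metis card_0_eq empty_iff)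
  then have "evalp (youngsym mp (delta w0 :: nat list \<Rightarrow> 'a)) ?s (total mp) i j \<noteq> 0"
    unfolding ev using nz by (simp add: comp_assoc)
  then have "evalp (youngsym mp (delta w0 :: nat list \<Rightarrow> 'a)) ?s (total mp) \<noteq> mzero"
    by (auto simp: mzero_def fun_eq_iff)
  note ne = this
  show "youngsym mp (delta w0 :: nat list \<Rightarrow> 'a) \<notin> IdP mp"
  proof
    assume "youngsym mp (delta w0 :: nat list \<Rightarrow> 'a) \<in> IdP mp"
    then have "\<forall>s. admissible mp s \<longrightarrow> evalp (youngsym mp (delta w0 :: nat list \<Rightarrow> 'a)) s (total mp) = mzero"
      unfolding IdP_def by blast
    then have "evalp (youngsym mp (delta w0 :: nat list \<Rightarrow> 'a)) ?s (total mp) = mzero"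
      using admis by blast
    then show False using ne by simp
  qed
qed





definition P23 :: "('a::comm_ring_1) mat3" where
  "P23 = (\<lambda>i j. if (i = 1 \<and> j = 1) \<or> (i = 2 \<and> j = 2) then 1 else 0)"

lemma P23_M3: "P23 \<in> M3" by (rule M3I) (auto simp: P23_def)

lemma P23_idem: "mmul P23 P23 = (P23 :: ('a::comm_ring_1) mat3)"
  by (rule mat_eqI[OF mmul_M3[OF P23_M3 P23_M3] P23_M3]) (auto simp: mmul_def sum3 P23_def less3)

lemma mone_row: "i < 3 \<Longrightarrow> mmul mone X i j = (X i j :: 'a::comm_ring_1)"
  by (auto simp: mmul_def sum3 mone_def less3)

lemma P23_row: "i = 1 \<or> i = 2 \<Longrightarrow> mmul P23 X i j = (X i j :: 'a::comm_ring_1)"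
  by (auto simp: mmul_def sum3 P23_def)

lemma diag_row:
  assumes "M = mone \<or> M = P23" "i = 1 \<or> i = 2"
  shows "mmul M X i j = (X i j :: 'a::comm_ring_1)"
proof (cases "M = mone")
  case True then show ?thesis using mone_row[of i X j] assms(2) by auto
next
  case False then have "M = P23" using assms(1) by simp
  then show ?thesis using P23_row[OF assms(2)] by simp
qed

lemma odd_P23_zero:
  assumes "is_odd W" "i = 1 \<or> i = 2"
  shows "mmul W (mmul P23 Z) i j = (0 :: 'a::comm_ring_1)"
proof -
  have "W i 1 = 0" "W i 2 = 0" using assms unfolding is_odd_def by auto
  then show ?thesis by (simp add: mmul_def sum3 P23_def)
qed

lemma mone_mone: "mmul mone mone = (mone :: ('a::comm_ring_1) mat3)"
  by (rule mmul_mone_left[OF mone_M3])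

lemma mprod_diag: "\<forall>M\<in>set L. M = mone \<or> M = P23 \<Longrightarrow> mprod L = mone \<or> mprod L = (P23 :: ('a::comm_ring_1) mat3)"
proof (induction L)
  case Nil then show ?case by simp
next
  case (Cons M L)
  then have a: "M = mone \<or> M = P23" and b: "mprod L = mone \<or> mprod L = P23" by auto
  from a b show ?case
    by (elim disjE) (simp_all add: mone_mone mmul_mone_left mmul_mone_right P23_M3 P23_idem)
qed

lemma mprod_diag_P23: "\<forall>M\<in>set L. M = mone \<or> M = P23 \<Longrightarrow> P23 \<in> set L \<Longrightarrow> mprod L = (P23 :: ('a::comm_ring_1) mat3)"
proof (induction L)
  case Nil then show ?case by simp
next
  case (Cons M L)
  show ?case
  proof (cases "P23 \<in> set L")
    case True
    then have "mprod L = P23" using Cons by simp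
    moreover have "M = mone \<or> M = P23" using Cons.prems by simp
    ultimately show ?thesis by (elim disjE) (simp_all add: mmul_mone_left P23_M3 P23_idem)
  next
    case False
    then have "M = P23" using Cons.prems by simp
    moreover have "mprod L = mone \<or> mprod L = P23" using Cons.prems by (intro mprod_diag) simp
    ultimately show ?thesis by (auto simp: mmul_mone_right P23_M3 P23_idem)
  qed
qed

lemma mprod_mone: "\<forall>M\<in>set L. M = mone \<Longrightarrow> mprod L = (mone :: ('a::comm_ring_1) mat3)"
proof (induction L)
  case Nil then show ?case by simp
next
  case (Cons M L)
  then have "M = mone" "mprod L = mone" by auto
  then show ?case by (simp add: mone_mone)
qed

lemma lambda1_reduce:
  fixes s :: "nat \<Rightarrow> ('a::comm_ring_1) mat3"
  assumes sM: "\<And>x. s x \<in> M3"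
    and dist: "distinct (X1 @ A @ X2 @ B)"
    and kd: "\<And>a b. a \<in> set X1 \<union> set X2 \<Longrightarrow> b \<in> set A \<union> set B \<Longrightarrow> key a \<noteq> key b"
    and FC: "F \<in> Cset key (set X1 \<union> set X2)"
    and hF: "\<And>x. x \<in> set X2 \<Longrightarrow> s (F x) = mone"
    and hdiag: "\<And>c1 x. c1 \<in> Cset key (set X1 \<union> set X2) \<Longrightarrow> x \<in> set X1 \<union> set X2 \<Longrightarrow> s (c1 x) = mone \<or> s (c1 x) = P23"
    and hnotF: "\<And>c1. c1 \<in> Cset key (set X1 \<union> set X2) \<Longrightarrow> c1 \<noteq> F \<Longrightarrow> \<exists>x\<in>set X2. s (c1 x) = P23"
    and hodd: "\<And>c2. c2 \<in> Cset key (set A \<union> set B) \<Longrightarrow> is_odd (mprod (map (s \<circ> c2) A))"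
    and i: "i = 1 \<or> i = 2"
  shows "(\<Sum>c\<in>Cset key ((set X1 \<union> set X2) \<union> (set A \<union> set B)). of_int (sign c) * mprod (map (s \<circ> c) (X1 @ A @ X2 @ B)) i j)
         = of_int (sign F) * Gm key s (A @ B) i j"
proof -
  let ?L = "set X1 \<union> set X2" and ?R = "set A \<union> set B"
  have disj: "?L \<inter> ?R = {}" using dist by auto
  have sm: "\<And>f L. set (map (s \<circ> f) L) \<subseteq> M3" using sM by auto
  define trm where "trm = (\<lambda>(c1::nat\<Rightarrow>nat) (c2::nat\<Rightarrow>nat). of_int (sign (c1 \<circ> c2)) * mprod (map (s \<circ> (c1 \<circ> c2)) (X1 @ A @ X2 @ B)) i j)"
  have split: "(\<Sum>c\<in>Cset key (?L \<union> ?R). of_int (sign c) * mprod (map (s \<circ> c) (X1 @ A @ X2 @ B)) i j)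
      = (\<Sum>c1\<in>Cset key ?L. \<Sum>c2\<in>Cset key ?R. trm c1 c2)"
    unfolding trm_def
    by (rule Cset_split[where h = "\<lambda>c. of_int (sign c) * mprod (map (s \<circ> c) (X1 @ A @ X2 @ B)) i j"])
       (use disj kd in auto)
  have term_eq: "trm c1 c2 = of_int (sign c1) * of_int (sign c2) *
      mmul (mprod (map (s \<circ> c1) X1)) (mmul (mprod (map (s \<circ> c2) A))
        (mmul (mprod (map (s \<circ> c1) X2)) (mprod (map (s \<circ> c2) B)))) i j"
    if c1: "c1 \<in> Cset key ?L" and c2: "c2 \<in> Cset key ?R" for c1 c2
  proof -
    have p1: "c1 permutes ?L" and p2: "c2 permutes ?R" using c1 c2 by (auto dest: Cset_perm)
    have fixL: "map (s \<circ> (c1 \<circ> c2)) X = map (s \<circ> c1) X" if "set X \<subseteq> ?L" for X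
    proof (rule map_cong[OF refl])
      fix x assume "x \<in> set X"
      then have "x \<notin> ?R" using that disj by auto
      then show "(s \<circ> (c1 \<circ> c2)) x = (s \<circ> c1) x" using p2 by (simp add: permutes_not_in)
    qed
    have fixR: "map (s \<circ> (c1 \<circ> c2)) X = map (s \<circ> c2) X" if "set X \<subseteq> ?R" for X
    proof (rule map_cong[OF refl])
      fix x assume "x \<in> set X"
      then have "x \<in> ?R" using that by auto
      then have "c2 x \<in> ?R" using permutes_in_image[OF p2] by simp
      then have "c2 x \<notin> ?L" using disj by auto
      then show "(s \<circ> (c1 \<circ> c2)) x = (s \<circ> c2) x" using p1 by (simp add: permutes_not_in)
    qed
    have pc1: "permutation c1" using p1 by (intro permutation_permutes[THEN iffD2] exI[of _ ?L]) simp
    have pc2: "permutation c2" using p2 by (intro permutation_permutes[THEN iffD2] exI[of _ ?R]) simp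
    have sgn: "sign (c1 \<circ> c2) = sign c1 * sign c2"
      by (rule sign_compose[OF pc1 pc2])
    have e: "map (s \<circ> (c1 \<circ> c2)) (X1 @ A @ X2 @ B) =
        map (s \<circ> c1) X1 @ map (s \<circ> c2) A @ map (s \<circ> c1) X2 @ map (s \<circ> c2) B"
      using fixL[of X1] fixL[of X2] fixR[of A] fixR[of B] by simp
    have "mprod (map (s \<circ> (c1 \<circ> c2)) (X1 @ A @ X2 @ B)) =
      mmul (mprod (map (s \<circ> c1) X1)) (mmul (mprod (map (s \<circ> c2) A))
        (mmul (mprod (map (s \<circ> c1) X2)) (mprod (map (s \<circ> c2) B))))"
      unfolding e by (simp add: mprod_append sM image_subset_iff)
    then show ?thesis by (simp add: trm_def sgn)
  qed
  have zero: "trm c1 c2 = 0" if c1: "c1 \<in> Cset key ?L" "c1 \<noteq> F" and c2: "c2 \<in> Cset key ?R" for c1 c2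
  proof -
    have dX2: "\<forall>M\<in>set (map (s \<circ> c1) X2). M = mone \<or> M = P23" using hdiag[OF c1(1)] by auto
    obtain x where "x \<in> set X2" "s (c1 x) = P23" using hnotF[OF c1] by blast
    then have "P23 \<in> set (map (s \<circ> c1) X2)" by force
    then have X2p: "mprod (map (s \<circ> c1) X2) = P23" using dX2 by (intro mprod_diag_P23) auto
    have dX1: "mprod (map (s \<circ> c1) X1) = mone \<or> mprod (map (s \<circ> c1) X1) = P23"
      using hdiag[OF c1(1)] by (intro mprod_diag) auto
    show ?thesis
      unfolding term_eq[OF c1(1) c2] X2p
      using diag_row[OF dX1 i] odd_P23_zero[OF hodd[OF c2] i] by simp
  qed
  have termF: "trm F c2 = of_int (sign F) * (of_int (sign c2) * mprod (map (s \<circ> c2) (A @ B)) i j)"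
    if c2: "c2 \<in> Cset key ?R" for c2
  proof -
    have X2p: "mprod (map (s \<circ> F) X2) = mone" using hF by (intro mprod_mone) auto
    have dX1: "mprod (map (s \<circ> F) X1) = mone \<or> mprod (map (s \<circ> F) X1) = P23"
      using hdiag[OF FC] by (intro mprod_diag) auto
    have "mprod (map (s \<circ> c2) (A @ B)) = mmul (mprod (map (s \<circ> c2) A)) (mprod (map (s \<circ> c2) B))"
      by (simp add: mprod_append sM image_subset_iff)
    moreover have "mprod (map (s \<circ> c2) B) \<in> M3" by (rule mprod_M3) (auto simp: sM)
    ultimately show ?thesis
      unfolding term_eq[OF FC c2] X2p
      using diag_row[OF dX1 i] by (simp add: mmul_mone_left)
  qed
  have fin: "finite (Cset key ?L)" by (rule Cset_finite) simp
  have "(\<Sum>c1\<in>Cset key ?L. \<Sum>c2\<in>Cset key ?R. trm c1 c2) = (\<Sum>c2\<in>Cset key ?R. trm F c2)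
      + (\<Sum>c1\<in>Cset key ?L - {F}. \<Sum>c2\<in>Cset key ?R. trm c1 c2)"
    by (rule sum.remove[OF fin FC])
  also have "(\<Sum>c1\<in>Cset key ?L - {F}. \<Sum>c2\<in>Cset key ?R. trm c1 c2) = 0"
    by (intro sum.neutral ballI) (auto simp: zero)
  also have "(\<Sum>c2\<in>Cset key ?R. trm F c2) = of_int (sign F) * Gm key s (A @ B) i j"
    by (simp add: termF Gm_def sum_distrib_left)
  finally show ?thesis using split by simp
qed





definition uM :: "('a::comm_ring_1) mat3" where
  "uM = (\<lambda>i j. if (i = 0 \<and> j = 1) \<or> (i = 2 \<and> j = 0) then 1 else 0)"
definition vM :: "('a::comm_ring_1) mat3" where
  "vM = (\<lambda>i j. if i = 0 \<and> j = 2 then 1 else if i = 1 \<and> j = 0 then -1 else 0)"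
definition Y1 :: "('a::comm_ring_1) mat3" where
  "Y1 = (\<lambda>i j. if i = 1 \<and> j = 1 then 1 else if i = 2 \<and> j = 2 then -1 else if i = 1 \<and> j = 2 then 1 else 0)"
definition Y2 :: "('a::comm_ring_1) mat3" where
  "Y2 = (\<lambda>i j. if i = 1 \<and> j = 1 then 1 else if i = 2 \<and> j = 2 then -1 else if i = 2 \<and> j = 1 then 1 else 0)"
definition Y3 :: "('a::comm_ring_1) mat3" where
  "Y3 = (\<lambda>i j. if i = 1 \<and> j = 2 then 1 else 0)"

definition comm :: "('a::comm_ring_1) mat3 \<Rightarrow> 'a mat3 \<Rightarrow> 'a mat3" where
  "comm X Y = (\<lambda>i j. mmul X Y i j - mmul Y X i j)"

definition KM :: "('a::comm_ring_1) mat3" where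
  "KM = (\<lambda>i j. if i = 1 \<and> j = 1 then 1 else if i = 2 \<and> j = 2 then -1
            else if (i = 1 \<and> j = 2) \<or> (i = 2 \<and> j = 1) then -2 else 0)"
definition DM :: "('a::comm_ring_1) mat3" where
  "DM = (\<lambda>i j. if i = 0 \<and> j = 0 then -2 else if (i = 1 \<and> j = 1) \<or> (i = 2 \<and> j = 2) then 1 else 0)"
definition SM :: "('a::comm_ring_1) mat3" where
  "SM = (\<lambda>i j. if (i = 1 \<and> j = 1) \<or> (i = 2 \<and> j = 2) then -3 else 0)"
definition e00 :: "('a::comm_ring_1) mat3" where
  "e00 = (\<lambda>i j. if i = 0 \<and> j = 0 then 1 else 0)"

definition Vv :: "nat \<times> nat \<Rightarrow> ('a::comm_ring_1) mat3" where
  "Vv kr = (case kr of (k, r) \<Rightarrow>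
     if k = 0 then (if r = 0 then mone else if r = 1 then P23 else mzero)
     else if k = 1 then (if r = 0 then Y1 else if r = 1 then Y2 else if r = 2 then Y3 else mzero)
     else if k = 3 then (if r = 0 then uM else if r = 1 then vM else mzero)
     else mzero)"

lemmas matdefs = uM_def vM_def Y1_def Y2_def Y3_def KM_def DM_def SM_def e00_def P23_def mone_def mzero_def

lemma M3s: "uM \<in> M3" "vM \<in> M3" "Y1 \<in> M3" "Y2 \<in> M3" "Y3 \<in> M3" "KM \<in> M3" "DM \<in> M3" "SM \<in> M3"
  "e00 \<in> M3" "mzero \<in> M3"
  by (auto intro!: M3I simp: matdefs)

lemma comm_M3: "X \<in> M3 \<Longrightarrow> Y \<in> M3 \<Longrightarrow> comm X Y \<in> M3"
  by (rule M3I) (auto simp: comm_def mmul_def M3D)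

lemma St3_M3: "X \<in> M3 \<Longrightarrow> Y \<in> M3 \<Longrightarrow> Z \<in> M3 \<Longrightarrow> St3 X Y Z \<in> M3"
  by (rule M3I) (auto simp: St3_def mmul_def M3D)

lemma K_eq: "comm Y1 Y2 = (KM :: ('a::comm_ring_1) mat3)"
  by (rule mat_eqI[OF comm_M3[OF M3s(3,4)] M3s(6)]) (auto simp: comm_def mmul_def sum3 matdefs less3)

lemma D_eq: "comm uM vM = (DM :: ('a::comm_ring_1) mat3)"
  by (rule mat_eqI[OF comm_M3[OF M3s(1,2)] M3s(7)]) (auto simp: comm_def mmul_def sum3 matdefs less3)

lemma S_eq: "St3 Y1 Y2 Y3 = (SM :: ('a::comm_ring_1) mat3)"
  by (rule mat_eqI[OF St3_M3[OF M3s(3,4,5)] M3s(8)]) (auto simp: St3_def mmul_def sum3 matdefs less3)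

lemma part0: "mone \<in> part 0" "P23 \<in> part 0"
  unfolding part_def is_even_def
  by (simp_all add: mone_M3 P23_M3) (simp_all add: sinv_def mone_def P23_def fun_eq_iff)

lemma part1: "Y1 \<in> part 1" "Y2 \<in> part 1" "Y3 \<in> part 1"
  unfolding part_def is_even_def
  by (simp_all add: M3s) (simp_all add: sinv_def matdefs fun_eq_iff)

lemma part3: "uM \<in> part 3" "vM \<in> part 3"
  unfolding part_def is_odd_def
  by (simp_all add: M3s) (simp_all add: sinv_def matdefs fun_eq_iff)

lemma partz: "mzero \<in> part k"
  unfolding part_def is_odd_def is_even_def
  by (simp_all add: M3s) (simp_all add: sinv_def matdefs fun_eq_iff)

lemma Vv_part: "Vv (k, r) \<in> part k"
  using part0 part1 part3 partz by (auto simp: Vv_def)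

lemma Vv_M3: "Vv kr \<in> M3"
  by (simp add: Vv_def M3s mone_M3 P23_M3 split: prod.splits)

lemma evens: "is_even (Y1::('a::comm_ring_1) mat3)" "is_even (Y2::'a mat3)" "is_even (Y3::'a mat3)" "is_even (mzero::'a mat3)"
  unfolding is_even_def by (simp_all add: M3s) (simp_all add: matdefs)

lemma odds: "is_odd (uM::('a::comm_ring_1) mat3)" "is_odd (vM::'a mat3)" "is_odd (mzero::'a mat3)"
  unfolding is_odd_def by (simp_all add: M3s) (simp_all add: matdefs)

lemma Vv_even1: "is_even (Vv (1, r))"
  by (simp add: Vv_def evens)

lemma Vv_odd3: "is_odd (Vv (3, r))"
  by (simp add: Vv_def odds)

lemma even_mmul: "is_even A \<Longrightarrow> is_even B \<Longrightarrow> is_even (mmul A (B::('a::comm_ring_1) mat3))"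
proof -
  assume a: "is_even A" "is_even B"
  then have "mmul A B \<in> M3" by (auto simp: is_even_def mmul_M3)
  then show ?thesis using a by (simp add: is_even_def mmul_def sum3)
qed

lemma even_odd_mmul: "is_even A \<Longrightarrow> is_odd B \<Longrightarrow> is_odd (mmul A (B::('a::comm_ring_1) mat3))"
proof -
  assume a: "is_even A" "is_odd B"
  then have "mmul A B \<in> M3" by (auto simp: is_even_def is_odd_def mmul_M3)
  then show ?thesis using a by (simp add: is_even_def is_odd_def mmul_def sum3)
qed

lemma mone_even: "is_even (mone :: ('a::comm_ring_1) mat3)"
  unfolding is_even_def by (simp add: mone_M3) (simp add: mone_def)

lemma mprod_even: "\<forall>M\<in>set L. is_even M \<Longrightarrow> is_even (mprod (L :: ('a::comm_ring_1) mat3 list))"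
  by (induction L) (auto simp: mone_even even_mmul)

lemma odd_single: "is_odd M \<Longrightarrow> is_odd (mprod [M::('a::comm_ring_1) mat3])"
  by (simp add: mmul_mone_right is_odd_def)

lemma mprod_even_odd: "\<forall>M\<in>set L. is_even M \<Longrightarrow> is_odd X \<Longrightarrow> is_odd (mprod (L @ [X::('a::comm_ring_1) mat3]))"
proof -
  assume a: "\<forall>M\<in>set L. is_even M" "is_odd X"
  have "set L \<subseteq> M3" using a(1) by (auto simp: is_even_def)
  moreover have "set [X] \<subseteq> M3" using a(2) by (auto simp: is_odd_def)
  ultimately have "mprod (L @ [X]) = mmul (mprod L) (mprod [X])" by (rule mprod_append)
  then show ?thesis using even_odd_mmul[OF mprod_even[OF a(1)] odd_single[OF a(2)]] by simp
qed

definition good2 :: "('a::field) mat3 \<Rightarrow> bool" where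
  "good2 M \<longleftrightarrow> is_even M \<and> (\<exists>N. N \<in> M3 \<and> mmul N (mmul P23 M) = P23)"

lemma even_P23_comm:
  assumes "is_even M" shows "mmul P23 M = mmul M (P23 :: ('a::comm_ring_1) mat3)"
proof -
  have M: "M \<in> M3" using assms by (simp add: is_even_def)
  show ?thesis
    by (rule mat_eqI[OF mmul_M3[OF P23_M3 M] mmul_M3[OF M P23_M3]]) (use assms in \<open>auto simp: is_even_def mmul_def sum3 P23_def less3\<close>)
qed

lemma good2_mone: "good2 (mone :: ('a::field) mat3)"
  unfolding good2_def using P23_idem P23_M3 mone_even by (auto simp: mmul_mone_right)

lemma good2_mmul:
  assumes "good2 M1" "good2 (M2 :: ('a::field) mat3)"
  shows "good2 (mmul M1 M2)"
proof -
  obtain N1 where N1: "N1 \<in> M3" "mmul N1 (mmul P23 M1) = P23" using assms(1) by (auto simp: good2_def)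
  obtain N2 where N2: "N2 \<in> M3" "mmul N2 (mmul P23 M2) = P23" using assms(2) by (auto simp: good2_def)
  have e1: "is_even M1" "is_even M2" using assms by (auto simp: good2_def)
  have M: "M1 \<in> M3" "M2 \<in> M3" using e1 by (auto simp: is_even_def)
  have "mmul P23 (mmul M1 M2) = mmul (mmul P23 M1) (mmul P23 M2)"
  proof -
    have "mmul (mmul P23 M1) (mmul P23 M2) = mmul P23 (mmul (mmul M1 P23) M2)"
      by (simp only: mmul_assoc)
    also have "\<dots> = mmul P23 (mmul (mmul P23 M1) M2)" by (simp only: even_P23_comm[OF e1(1)])
    also have "\<dots> = mmul (mmul P23 P23) (mmul M1 M2)" by (simp only: mmul_assoc)
    also have "\<dots> = mmul P23 (mmul M1 M2)" by (simp only: P23_idem)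
    finally show ?thesis by simp
  qed
  then have "mmul (mmul N2 N1) (mmul P23 (mmul M1 M2)) = mmul N2 (mmul (mmul N1 (mmul P23 M1)) (mmul P23 M2))"
    by (simp add: mmul_assoc)
  also have "\<dots> = P23" using N1 N2 by (simp add: mmul_assoc[symmetric] P23_idem)
  finally show ?thesis unfolding good2_def using even_mmul[OF e1] mmul_M3[OF N2(1) N1(1)] by blast
qed

lemma good2_mprod: "\<forall>M\<in>set L. good2 M \<Longrightarrow> good2 (mprod (L :: ('a::field) mat3 list))"
  by (induction L) (auto simp: good2_mone good2_mmul)

lemma good2_Y1: "good2 (Y1 :: ('a::field) mat3)"
  unfolding good2_def
proof (intro conjI exI)
  show "is_even (Y1 :: 'a mat3)" by (rule evens)
  show "(Y1 :: 'a mat3) \<in> M3" by (rule M3s)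
  show "mmul Y1 (mmul P23 Y1) = (P23 :: 'a mat3)"
    by (rule mat_eqI[OF mmul_M3[OF M3s(3) mmul_M3[OF P23_M3 M3s(3)]] P23_M3]) (auto simp: mmul_def sum3 matdefs less3)
qed

lemma good2_K: "good2 (KM :: ('a::field_char_0) mat3)"
  unfolding good2_def
proof (intro conjI exI)
  show "is_even (KM :: 'a mat3)" unfolding is_even_def by (simp add: M3s) (simp add: matdefs)
  show "(\<lambda>i j. KM i j / 5 :: 'a) \<in> M3" by (rule M3I) (auto simp: matdefs)
  show "mmul (\<lambda>i j. KM i j / 5) (mmul P23 KM) = (P23 :: 'a mat3)"
    by (rule mat_eqI[OF mmul_M3 P23_M3]) (auto intro!: M3I simp: mmul_def sum3 matdefs less3 mmul_M3 field_simps)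
qed

lemma good2_S: "good2 (SM :: ('a::field_char_0) mat3)"
  unfolding good2_def
proof (intro conjI exI)
  show "is_even (SM :: 'a mat3)" unfolding is_even_def by (simp add: M3s) (simp add: matdefs)
  show "(\<lambda>i j. - P23 i j / 3 :: 'a) \<in> M3" by (rule M3I) (auto simp: matdefs)
  show "mmul (\<lambda>i j. - P23 i j / 3) (mmul P23 SM) = (P23 :: 'a mat3)"
    by (rule mat_eqI[OF mmul_M3 P23_M3]) (auto intro!: M3I simp: mmul_def sum3 matdefs less3 mmul_M3 field_simps)
qed

definition rinv :: "('a::field) mat3 \<Rightarrow> bool" where
  "rinv M \<longleftrightarrow> M \<in> M3 \<and> (\<exists>E. E \<in> M3 \<and> mmul M E = mone)"

lemma rinv_mone: "rinv (mone :: ('a::field) mat3)"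
  unfolding rinv_def using mone_M3 mone_mone by blast

lemma rinv_mmul: "rinv M1 \<Longrightarrow> rinv M2 \<Longrightarrow> rinv (mmul M1 (M2 :: ('a::field) mat3))"
proof -
  assume a: "rinv M1" "rinv M2"
  obtain E1 where E1: "E1 \<in> M3" "mmul M1 E1 = mone" using a(1) by (auto simp: rinv_def)
  obtain E2 where E2: "E2 \<in> M3" "mmul M2 E2 = mone" using a(2) by (auto simp: rinv_def)
  have "mmul (mmul M1 M2) (mmul E2 E1) = mmul M1 (mmul (mmul M2 E2) E1)" by (simp add: mmul_assoc)
  also have "\<dots> = mone" using E1 E2 by (simp add: mmul_mone_left)
  finally show ?thesis using a E1 E2 by (auto simp: rinv_def mmul_M3 intro!: exI[of _ "mmul E2 E1"])
qed

lemma rinv_mprod: "\<forall>M\<in>set L. rinv M \<Longrightarrow> rinv (mprod (L :: ('a::field) mat3 list))"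
  by (induction L) (auto simp: rinv_mone rinv_mmul)

lemma rinv_D: "rinv (DM :: ('a::field_char_0) mat3)"
  unfolding rinv_def
proof (intro conjI exI)
  show "(DM :: 'a mat3) \<in> M3" by (rule M3s)
  show "(\<lambda>i j. if i = 0 \<and> j = 0 then - 1 / 2 else if (i = 1 \<and> j = 1) \<or> (i = 2 \<and> j = 2) then 1 else 0 :: 'a) \<in> M3"
    by (rule M3I) auto
  show "mmul DM (\<lambda>i j. if i = 0 \<and> j = 0 then - 1 / 2 else if (i = 1 \<and> j = 1) \<or> (i = 2 \<and> j = 2) then 1 else 0) = (mone :: 'a mat3)"
    by (rule mat_eqI[OF mmul_M3 mone_M3]) (auto intro!: M3I simp: mmul_def sum3 matdefs less3 M3s)
qed

definition scal :: "'a::comm_ring_1 \<Rightarrow> 'a mat3" where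
  "scal t = (\<lambda>i j. t * e00 i j)"

lemma scal_M3: "scal t \<in> M3" by (rule M3I) (auto simp: scal_def e00_def)

lemma uY1u: "mprod [uM, Y1, uM] = scal (1::'a::comm_ring_1)"
  by (rule mat_eqI[OF mprod_M3 scal_M3]) (simp add: M3s, auto simp: mmul_def sum3 matdefs scal_def less3)

lemma uKu: "mprod [uM, KM, uM] = scal (-2::'a::comm_ring_1)"
  by (rule mat_eqI[OF mprod_M3 scal_M3]) (simp add: M3s, auto simp: mmul_def sum3 matdefs scal_def less3)

lemma uSu: "S = Y1 \<or> S = KM \<Longrightarrow> \<exists>t. t \<noteq> 0 \<and> mprod [uM, S, uM] = scal (t::'a::field_char_0)"
  using uY1u uKu by (metis neg_equal_0_iff_equal one_neq_zero zero_neq_numeral)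

lemma scal_mul: "mmul (scal a) (scal b) = scal (a * b :: 'a::comm_ring_1)"
  by (rule mat_eqI[OF mmul_M3[OF scal_M3 scal_M3] scal_M3]) (auto simp: mmul_def sum3 scal_def e00_def less3)

lemma chain_Q:
  assumes "\<forall>k\<in>set ks. Sf k = Y1 \<or> Sf k = KM"
  shows "mprod (concat (map (\<lambda>k. [uM, Sf k, uM]) ks)) = mone \<or>
         (\<exists>t. t \<noteq> 0 \<and> mprod (concat (map (\<lambda>k. [uM, Sf k, uM]) ks)) = scal (t::'a::field_char_0))"
  using assms
proof (induction ks)
  case Nil then show ?case by simp
next
  case (Cons k ks)
  obtain t where t: "t \<noteq> 0" "mprod [uM, Sf k, uM] = scal (t::'a)" using uSu Cons.prems by force
  have sM: "set [uM, Sf k, uM] \<subseteq> M3" using Cons.prems M3s by auto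
  have sM2: "set (concat (map (\<lambda>k. [uM, Sf k, uM]) ks)) \<subseteq> M3" using Cons.prems M3s by auto
  have e: "mprod (concat (map (\<lambda>k. [uM, Sf k, uM]) (k # ks))) =
      mmul (scal t) (mprod (concat (map (\<lambda>k. [uM, Sf k, uM]) ks)))"
    using mprod_append[OF sM sM2] t by simp
  from Cons.IH Cons.prems have "mprod (concat (map (\<lambda>k. [uM, Sf k, uM]) ks)) = mone \<or>
         (\<exists>t. t \<noteq> 0 \<and> mprod (concat (map (\<lambda>k. [uM, Sf k, uM]) ks)) = scal (t::'a))" by simp
  then show ?case
  proof
    assume "mprod (concat (map (\<lambda>k. [uM, Sf k, uM]) ks)) = mone"
    then show ?thesis using e t by (auto simp: mmul_mone_right scal_M3)
  next
    assume "\<exists>t. t \<noteq> 0 \<and> mprod (concat (map (\<lambda>k. [uM, Sf k, uM]) ks)) = scal (t::'a)"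
    then obtain t' where t': "t' \<noteq> 0" "mprod (concat (map (\<lambda>k. [uM, Sf k, uM]) ks)) = scal t'" by blast
    have "mprod (concat (map (\<lambda>k. [uM, Sf k, uM]) (k # ks))) = scal (t * t')"
      unfolding e t'(2) by (rule scal_mul)
    moreover have "t * t' \<noteq> 0" using t t' by simp
    ultimately show ?thesis by blast
  qed
qed

lemma chain_row2:
  assumes Q: "Q = mone \<or> (\<exists>t. t \<noteq> 0 \<and> Q = scal (t::'a::field_char_0))"
    and T: "T = mone \<or> T = uM"
  shows "\<exists>j. mmul uM (mmul Q T) 2 j \<noteq> 0"
proof -
  from Q show ?thesis
  proof
    assume "Q = mone"
    with T show ?thesis
      by (elim disjE) (auto simp: mmul_mone_left mone_M3 M3s mmul_def sum3 matdefs intro!: exI[of _ 0] exI[of _ 1])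
  next
    assume "\<exists>t. t \<noteq> 0 \<and> Q = scal (t::'a)"
    then obtain t where t: "t \<noteq> 0" "Q = scal t" by blast
    with T show ?thesis
      by (elim disjE) (auto simp: mmul_mone_right scal_M3 mmul_def sum3 matdefs scal_def intro!: exI[of _ 0] exI[of _ 1])
  qed
qed

lemma final_nz:
  assumes g: "good2 M0" and r: "rinv Z" and Ch: "Ch \<in> M3" and ch2: "Ch 2 j0 \<noteq> (0::'a::field)"
  shows "\<exists>i j. (i = 1 \<or> i = 2) \<and> mmul M0 (mmul Ch Z) i j \<noteq> 0"
proof (rule ccontr)
  assume "\<not> ?thesis"
  then have z: "\<And>i j. i = 1 \<or> i = 2 \<Longrightarrow> mmul M0 (mmul Ch Z) i j = 0" by blast
  obtain N where N: "N \<in> M3" "mmul N (mmul P23 M0) = P23" using g by (auto simp: good2_def)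
  obtain E where E: "E \<in> M3" "mmul Z E = mone" using r by (auto simp: rinv_def)
  have "mmul P23 (mmul M0 (mmul Ch Z)) = mzero"
    using z by (auto simp: fun_eq_iff mmul_def sum3 P23_def mzero_def)
  then have "mmul N (mmul P23 (mmul M0 (mmul Ch Z))) = mzero"
    by (simp add: mmul_def mzero_def fun_eq_iff)
  then have "mmul (mmul N (mmul P23 M0)) (mmul Ch Z) = mzero"
    by (simp only: mmul_assoc)
  then have "mmul P23 (mmul Ch Z) = mzero" using N by simp
  then have "mmul (mmul P23 (mmul Ch Z)) E = mzero" by (simp add: mmul_def mzero_def fun_eq_iff)
  then have "mmul P23 Ch = mzero" using E Ch by (simp add: mmul_assoc mmul_mone_right)
  then have "mmul P23 Ch 2 j0 = 0" by (simp add: mzero_def)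
  then show False using ch2 by (simp add: P23_row)
qed





lemma arith_chain:
  assumes "1 \<le> (r1::nat)"
  shows "t < r1 \<longleftrightarrow> t = 0 \<or> (\<exists>k<(r1 - 1) div 2. t = 1 + 2 * k \<or> t = 2 + 2 * k) \<or> (even r1 \<and> t = r1 - 1)"
  using assms by presburger

locale conf =
  fixes la1 :: "nat list" and g1 g2 g3 r1 r2 :: nat
  assumes la_part: "is_partition la1" and la_len: "length la1 \<le> 2"
    and G_pos: "0 < g1 + g2 + g3" and R_pos: "0 < r1 + r2"
    and mcond: "(r1 - 1) div 2 \<le> g1 + g2"
begin

definition "mp = [la1, mkpart [g1 + g2 + g3, g2 + g3, g3], [], mkpart [r1 + r2, r2]]"
definition "mm = (r1 - 1) div 2"
definition "a1 = (if la1 = [] then 0 else la1 ! 0)"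
definition "a2 = (if length la1 < 2 then 0 else la1 ! 1)"

lemma a2_le: "a2 \<le> a1"
  using la_part la_len unfolding a1_def a2_def is_partition_def
  by (auto simp: sorted_wrt_iff_nth_less)

lemma la1_shape: "la1 = [] \<or> (\<exists>x. la1 = [x]) \<or> (\<exists>x y. la1 = [x, y])"
proof (cases la1)
  case Nil then show ?thesis by simp
next
  case (Cons x xs)
  show ?thesis
  proof (cases xs)
    case Nil then show ?thesis using Cons by simp
  next
    case (Cons y ys)
    then have "ys = []" using la_len \<open>la1 = x # xs\<close> by simp
    then show ?thesis using Cons \<open>la1 = x # xs\<close> by simp
  qed
qed

lemma valid0: "valid mp 0 r c \<longleftrightarrow> (r = 0 \<and> c < a1) \<or> (r = 1 \<and> c < a2)"
  using la1_shape by (auto simp: valid_def mp_def a1_def a2_def nth_Cons split: nat.splits)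

lemma sorted2: "sorted_wrt (\<ge>) [g1 + g2 + g3, g2 + g3, g3]" by simp
lemma sorted4: "sorted_wrt (\<ge>) [r1 + r2, r2]" by simp

lemma valid1: "valid mp 1 r c \<longleftrightarrow> (r = 0 \<and> c < g1 + g2 + g3) \<or> (r = 1 \<and> c < g2 + g3) \<or> (r = 2 \<and> c < g3)"
proof -
  have "valid mp 1 r c \<longleftrightarrow> (r < length [g1 + g2 + g3, g2 + g3, g3] \<and> c < [g1 + g2 + g3, g2 + g3, g3] ! r)"
    unfolding valid_def mp_def using valid_mkpart[OF sorted2] by simp
  also have "\<dots> \<longleftrightarrow> (r = 0 \<and> c < g1 + g2 + g3) \<or> (r = 1 \<and> c < g2 + g3) \<or> (r = 2 \<and> c < g3)"
    by (auto simp: less_Suc_eq nth_Cons split: nat.splits)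
  finally show ?thesis .
qed

lemma valid1s: "valid mp (Suc 0) r c \<longleftrightarrow> (r = 0 \<and> c < g1 + g2 + g3) \<or> (r = Suc 0 \<and> c < g2 + g3) \<or> (r = 2 \<and> c < g3)"
  using valid1[of r c] by simp

lemma valid3: "valid mp 3 r c \<longleftrightarrow> (r = 0 \<and> c < r1 + r2) \<or> (r = 1 \<and> c < r2)"
proof -
  have "valid mp 3 r c \<longleftrightarrow> (r < length [r1 + r2, r2] \<and> c < [r1 + r2, r2] ! r)"
    unfolding valid_def mp_def using valid_mkpart[OF sorted4] by (simp add: numeral_3_eq_3)
  also have "\<dots> \<longleftrightarrow> (r = 0 \<and> c < r1 + r2) \<or> (r = 1 \<and> c < r2)"
    by (auto simp: less_Suc_eq numeral_2_eq_2)
  finally show ?thesis .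
qed

lemma valid_k: "valid mp k r c \<Longrightarrow> k = 0 \<or> k = 1 \<or> k = 3"
  by (auto simp: valid_def mp_def nth_Cons split: nat.splits)

lemma suml1: "sum_list la1 = a1 + a2"
  using la1_shape by (auto simp: a1_def a2_def)

lemma cell00: "cell mp 0 0 c = c"
  by (simp add: cell_def offs_def)

lemma cell01: "cell mp 0 1 c = a1 + c"
  using la1_shape by (auto simp: cell_def offs_def mp_def a1_def)

lemma cell01s: "cell mp 0 (Suc 0) c = a1 + c"
  using cell01 by simp

lemma offs1: "offs mp 1 = a1 + a2"
  by (simp add: offs_def mp_def sizes_def suml1)

lemma cell_ge: "valid mp k r c \<Longrightarrow> k \<noteq> 0 \<Longrightarrow> a1 + a2 \<le> cell mp k r c"
proof -
  assume "valid mp k r c" "k \<noteq> 0"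
  then have "offs mp 1 \<le> offs mp k" by (intro offs_mono) simp
  then show ?thesis using offs1 by (simp add: cell_def)
qed

definition rows :: "nat \<times> nat \<Rightarrow> nat list" where
  "rows kc = (if fst kc = 1 then (if snd kc < g3 then [0,1,2] else if snd kc < g2 + g3 then [0,1] else [0])
              else (if snd kc < r2 then [0,1] else [0]))"

definition colL :: "nat \<times> nat \<Rightarrow> nat list" where
  "colL kc = map (\<lambda>r. cell mp (fst kc) r (snd kc)) (rows kc)"

definition validcol :: "nat \<times> nat \<Rightarrow> bool" where
  "validcol kc \<longleftrightarrow> (fst kc = 1 \<and> snd kc < g1 + g2 + g3) \<or> (fst kc = 3 \<and> snd kc < r1 + r2)"

lemma rows_valid: "validcol kc \<Longrightarrow> r \<in> set (rows kc) \<Longrightarrow> valid mp (fst kc) r (snd kc)"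
  by (auto simp: validcol_def rows_def valid1s valid3 split: if_splits)

lemma valid_rows: "valid mp k r c \<Longrightarrow> k \<noteq> 0 \<Longrightarrow> validcol (k, c) \<and> r \<in> set (rows (k, c))"
  using valid_k[of k r c] by (auto simp: validcol_def rows_def valid1s valid3 valid1)

lemma colL_key: "validcol kc \<Longrightarrow> x \<in> set (colL kc) \<Longrightarrow> colkey mp x = kc"
  by (auto simp: colL_def colkey_cell rows_valid)

lemma rows_dist: "distinct (rows kc)" by (simp add: rows_def)

lemma colL_dist: "validcol kc \<Longrightarrow> distinct (colL kc)"
  unfolding colL_def
  by (rule distinct_map[THEN iffD2]) (auto simp: rows_dist inj_on_def dest: cell_inj[OF rows_valid rows_valid])

lemma colL_hd: "colL kc = cell mp (fst kc) 0 (snd kc) # map (\<lambda>r. cell mp (fst kc) r (snd kc)) (tl (rows kc))"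
  by (simp add: colL_def rows_def)

definition gval :: "nat \<times> nat \<Rightarrow> ('a::comm_ring_1) mat3" where
  "gval kc = (if fst kc = 1 then (if snd kc < g3 then SM else if snd kc < g2 + g3 then KM else Y1)
              else (if snd kc < r2 then DM else uM))"

lemma sv_cell: "valid mp k r c \<Longrightarrow> (Vv \<circ> rowkey mp) (cell mp k r c) = Vv (k, r)"
  by (simp add: rowkey_cell)

lemma Vv_M3': "(Vv \<circ> rowkey mp) x \<in> M3" by (simp add: Vv_M3)

lemma Gm_col:
  assumes v: "validcol kc"
  shows "Gm (colkey mp) (Vv \<circ> rowkey mp) (colL kc) = (gval kc :: ('a::comm_ring_1) mat3)"
proof -
  obtain k c where kc: "kc = (k, c)" by (cases kc)
  have vr: "\<And>r. r \<in> set (rows kc) \<Longrightarrow> valid mp k r c" using rows_valid[OF v] kc by simp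
  have key: "\<And>x. x \<in> set (colL kc) \<Longrightarrow> colkey mp x = kc" by (rule colL_key[OF v])
  have dist: "distinct (colL kc)" by (rule colL_dist[OF v])
  consider (k1a) "k = 1" "c < g3" | (k1b) "k = 1" "\<not> c < g3" "c < g2 + g3" | (k1c) "k = 1" "\<not> c < g2 + g3"
    | (k3a) "k \<noteq> 1" "c < r2" | (k3b) "k \<noteq> 1" "\<not> c < r2" by blast
  then show ?thesis
  proof cases
    case k1a
    then have L: "colL kc = [cell mp 1 0 c, cell mp 1 1 c, cell mp 1 2 c]" by (simp add: colL_def rows_def kc)
    have "Gm (colkey mp) (Vv \<circ> rowkey mp) (colL kc) = St3 (Vv (1,0)) (Vv (1,1)) (Vv (1,2))"
      unfolding L
      using dist[unfolded L] k1a
      by (subst Gm_triple) (auto simp: Vv_M3' Vv_M3 rowkey_cell colkey_cell valid1s)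
    then show ?thesis using k1a by (simp add: gval_def kc Vv_def S_eq)
  next
    case k1b
    then have L: "colL kc = [cell mp 1 0 c, cell mp 1 1 c]" by (simp add: colL_def rows_def kc)
    have "Gm (colkey mp) (Vv \<circ> rowkey mp) (colL kc) = comm (Vv (1,0)) (Vv (1,1))"
      unfolding L
      using dist[unfolded L] k1b
      by (subst Gm_pair) (auto simp: Vv_M3' Vv_M3 rowkey_cell colkey_cell valid1s comm_def)
    then show ?thesis using k1b by (simp add: gval_def kc Vv_def K_eq)
  next
    case k1c
    then have L: "colL kc = [cell mp 1 0 c]" by (simp add: colL_def rows_def kc)
    have "Gm (colkey mp) (Vv \<circ> rowkey mp) (colL kc) = Vv (1,0)"
      unfolding L
      using k1c v kc
      by (subst Gm_single) (auto simp: Vv_M3' Vv_M3 rowkey_cell valid1s validcol_def)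
    then show ?thesis using k1c by (simp add: gval_def kc Vv_def)
  next
    case k3a
    then have k3: "k = 3" using v kc by (simp add: validcol_def)
    then have L: "colL kc = [cell mp 3 0 c, cell mp 3 1 c]" using k3a by (simp add: colL_def rows_def kc)
    have "Gm (colkey mp) (Vv \<circ> rowkey mp) (colL kc) = comm (Vv (3,0)) (Vv (3,1))"
      unfolding L
      using dist[unfolded L] k3a k3 v kc
      by (subst Gm_pair) (auto simp: Vv_M3' Vv_M3 rowkey_cell colkey_cell valid3 comm_def validcol_def)
    then show ?thesis using k3a k3 by (simp add: gval_def kc Vv_def D_eq)
  next
    case k3b
    then have k3: "k = 3" using v kc by (simp add: validcol_def)
    then have L: "colL kc = [cell mp 3 0 c]" using k3b by (simp add: colL_def rows_def kc)
    have "Gm (colkey mp) (Vv \<circ> rowkey mp) (colL kc) = Vv (3,0)"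
      unfolding L
      using k3b k3 v kc
      by (subst Gm_single) (auto simp: Vv_M3' Vv_M3 rowkey_cell valid3 validcol_def)
    then show ?thesis using k3b k3 by (simp add: gval_def kc Vv_def)
  qed
qed

definition M0 :: "(nat \<times> nat) list" where "M0 = map (Pair 1) ([0..<g3] @ [g3 + mm..<g1 + g2 + g3])"
definition trip :: "nat \<Rightarrow> (nat \<times> nat) list" where "trip k = [(3, r2 + 1 + 2 * k), (1, g3 + k), (3, r2 + 2 + 2 * k)]"
definition CH :: "(nat \<times> nat) list" where
  "CH = (if r1 = 0 then [] else (3, r2) # concat (map trip [0..<mm]) @ (if even r1 then [(3, r2 + r1 - 1)] else []))"
definition ZC :: "(nat \<times> nat) list" where "ZC = map (Pair 3) [0..<r2]"
definition GL :: "(nat \<times> nat) list" where "GL = M0 @ CH @ ZC"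

lemma mm_le: "mm \<le> g1 + g2" using mcond by (simp add: mm_def)

lemma mm0: "r1 = 0 \<Longrightarrow> mm = 0" unfolding mm_def by simp

lemma set_trips: "x \<in> set (concat (map trip [0..<n])) \<longleftrightarrow>
   (\<exists>k<n. x = (3, r2 + 1 + 2 * k) \<or> x = (1, g3 + k) \<or> x = (3, r2 + 2 + 2 * k))"
  by (auto simp: trip_def)

lemma set_GL: "set GL = {kc. validcol kc}"
proof (intro set_eqI iffI)
  fix kc assume kc: "kc \<in> set GL"
  show "kc \<in> {kc. validcol kc}"
  proof -
    have "kc \<in> set M0 \<or> kc \<in> set CH \<or> kc \<in> set ZC" using kc by (auto simp: GL_def)
    moreover have "validcol kc" if "kc \<in> set M0" using that mm_le by (auto simp: M0_def validcol_def)
    moreover have "validcol kc" if "kc \<in> set ZC" using that by (auto simp: ZC_def validcol_def)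
    moreover have "validcol kc" if a: "kc \<in> set CH"
    proof -
      have r1: "r1 \<noteq> 0" using a by (auto simp: CH_def split: if_splits)
      have "kc = (3, r2) \<or> (\<exists>k<mm. kc = (3, r2 + 1 + 2 * k) \<or> kc = (1, g3 + k) \<or> kc = (3, r2 + 2 + 2 * k))
          \<or> (even r1 \<and> kc = (3, r2 + r1 - 1))"
        using a r1 by (auto simp: CH_def trip_def split: if_splits)
      then show ?thesis using r1 mm_le unfolding validcol_def mm_def by (elim disjE exE) auto
    qed
    ultimately show ?thesis by blast
  qed
next
  fix kc assume "kc \<in> {kc. validcol kc}"
  then have v: "validcol kc" by simp
  obtain k c where kc: "kc = (k, c)" by (cases kc)
  show "kc \<in> set GL"
  proof (cases "k = 1")
    case True
    then have c: "c < g1 + g2 + g3" using v kc by (simp add: validcol_def)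
    show ?thesis
    proof (cases "g3 \<le> c \<and> c < g3 + mm")
      case True
      have r1: "r1 \<noteq> 0"
      proof
        assume "r1 = 0"
        then have "mm = 0" by (rule mm0)
        then show False using True by simp
      qed
      have "kc \<in> set (concat (map trip [0..<mm]))"
        unfolding set_trips using True \<open>k = 1\<close> kc by (intro exI[of _ "c - g3"]) auto
      then show ?thesis using r1 by (simp add: GL_def CH_def)
    next
      case False
      then have "kc \<in> set M0" using c \<open>k = 1\<close> kc by (auto simp: M0_def)
      then show ?thesis by (simp add: GL_def)
    qed
  next
    case False
    then have k3: "k = 3" and c: "c < r1 + r2" using v kc by (auto simp: validcol_def)
    show ?thesis
    proof (cases "c < r2")
      case True
      then have "kc \<in> set ZC" using k3 kc by (simp add: ZC_def)
      then show ?thesis by (simp add: GL_def)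
    next
      case False
      define t where "t = c - r2"
      have r1: "1 \<le> r1" and t: "t < r1" using c False by (auto simp: t_def)
      then have "t = 0 \<or> (\<exists>k<mm. t = 1 + 2 * k \<or> t = 2 + 2 * k) \<or> (even r1 \<and> t = r1 - 1)"
        using arith_chain[OF r1, of t] by (simp add: mm_def)
      moreover have ceq: "c = r2 + t" using False by (simp add: t_def)
      ultimately have "kc \<in> set CH" using r1 k3 kc unfolding CH_def
        by (elim disjE exE) (auto simp: trip_def)
      then show ?thesis by (simp add: GL_def)
    qed
  qed
qed

lemma len_trips: "length (concat (map trip xs)) = 3 * length xs"
  by (induction xs) (auto simp: trip_def)

lemma length_GL: "length GL = g1 + g2 + g3 + r1 + r2"
proof -
  have "length M0 = g3 + (g1 + g2 + g3 - (g3 + mm))" by (simp add: M0_def)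
  moreover have "length CH = (if r1 = 0 then 0 else 1 + 3 * mm + (if even r1 then 1 else 0))"
    by (simp add: CH_def len_trips)
  moreover have "length ZC = r2" by (simp add: ZC_def)
  ultimately show ?thesis using mm_le unfolding GL_def mm_def by simp presburger
qed

lemma card_validcol: "card {kc. validcol kc} = g1 + g2 + g3 + r1 + r2"
proof -
  have e: "{kc. validcol kc} = Pair 1 ` {..<g1 + g2 + g3} \<union> Pair 3 ` {..<r1 + r2}"
    by (auto simp: validcol_def)
  have "card (Pair (1::nat) ` {..<g1 + g2 + g3} \<union> Pair (3::nat) ` {..<r1 + r2}) =
      card (Pair (1::nat) ` {..<g1 + g2 + g3}) + card (Pair (3::nat) ` {..<r1 + r2})"
    by (rule card_Un_disjoint) auto
  also have "\<dots> = (g1 + g2 + g3) + (r1 + r2)" by (simp add: card_image inj_on_def)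
  finally show ?thesis using e by simp
qed

lemma distinct_GL: "distinct GL"
  by (rule card_distinct) (simp add: set_GL card_validcol length_GL)

lemma distinct_cols: "distinct L \<Longrightarrow> \<forall>kc\<in>set L. validcol kc \<Longrightarrow> distinct (concat (map colL L))"
proof (induction L)
  case Nil then show ?case by simp
next
  case (Cons a L)
  have "set (colL a) \<inter> set (concat (map colL L)) = {}"
  proof (rule ccontr)
    assume "set (colL a) \<inter> set (concat (map colL L)) \<noteq> {}"
    then obtain x b where x: "x \<in> set (colL a)" "b \<in> set L" "x \<in> set (colL b)" by auto
    have "colkey mp x = a" using colL_key x(1) Cons.prems by simp
    moreover have "colkey mp x = b" using colL_key x(2,3) Cons.prems by simp
    ultimately show False using x(2) Cons.prems by auto
  qed
  then show ?case using Cons colL_dist by auto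
qed

definition "wp = concat (map colL GL)"
definition "c0 = (if r1 = 0 then 0 else r2)"
definition "Aw = concat (map colL M0) @ [cell mp 3 0 c0]"
definition "Bw = tl (concat (map colL (CH @ ZC)))"
definition "X1 = [0..<a1]"
definition "X2 = [a1..<a1 + a2]"
definition "w0 = X1 @ Aw @ X2 @ Bw"

lemma CHZC_hd: "\<exists>t. CH @ ZC = (3, c0) # t"
proof (cases "r1 = 0")
  case True
  then have "r2 \<noteq> 0" using R_pos by simp
  then obtain r where "r2 = Suc r" by (cases r2) auto
  then show ?thesis using True unfolding CH_def ZC_def c0_def by (simp add: upt_conv_Cons del: upt_Suc)
next
  case False then show ?thesis by (simp add: CH_def c0_def)
qed

lemma rest_eq: "concat (map colL (CH @ ZC)) = cell mp 3 0 c0 # Bw"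
proof -
  obtain t where t: "CH @ ZC = (3, c0) # t" using CHZC_hd by blast
  have "concat (map colL (CH @ ZC)) = colL (3, c0) @ concat (map colL t)" by (simp add: t)
  also have "colL (3, c0) = cell mp 3 0 c0 # map (\<lambda>r. cell mp 3 r c0) (tl (rows (3, c0)))"
    by (rule colL_hd[of "(3, c0)", simplified])
  finally have e: "concat (map colL (CH @ ZC)) = cell mp 3 0 c0 # (map (\<lambda>r. cell mp 3 r c0) (tl (rows (3, c0))) @ concat (map colL t))"
    by simp
  show ?thesis unfolding Bw_def e by simp
qed

lemma wp_eq: "wp = Aw @ Bw"
proof -
  have "wp = concat (map colL M0) @ concat (map colL (CH @ ZC))" by (simp add: wp_def GL_def)
  then show ?thesis unfolding rest_eq Aw_def by simp
qed

lemma distinct_wp: "distinct wp"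
  unfolding wp_def by (rule distinct_cols) (simp_all add: distinct_GL set_GL)

lemma set_wp: "set wp = {x. \<exists>k r c. valid mp k r c \<and> k \<noteq> 0 \<and> x = cell mp k r c}"
proof (intro set_eqI iffI)
  fix x assume "x \<in> set wp"
  then obtain kc where kc: "kc \<in> set GL" "x \<in> set (colL kc)" by (auto simp: wp_def)
  then have v: "validcol kc" using set_GL by auto
  obtain r where r: "r \<in> set (rows kc)" "x = cell mp (fst kc) r (snd kc)" using kc(2) by (auto simp: colL_def)
  have "valid mp (fst kc) r (snd kc)" by (rule rows_valid[OF v r(1)])
  moreover have "fst kc \<noteq> 0" using v by (auto simp: validcol_def)
  ultimately show "x \<in> {x. \<exists>k r c. valid mp k r c \<and> k \<noteq> 0 \<and> x = cell mp k r c}" using r by blast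
next
  fix x assume "x \<in> {x. \<exists>k r c. valid mp k r c \<and> k \<noteq> 0 \<and> x = cell mp k r c}"
  then obtain k r c where v: "valid mp k r c" "k \<noteq> 0" "x = cell mp k r c" by blast
  then have "validcol (k, c)" "r \<in> set (rows (k, c))" using valid_rows by auto
  then have "(k, c) \<in> set GL" "x \<in> set (colL (k, c))" using v set_GL by (auto simp: colL_def)
  then show "x \<in> set wp" by (auto simp: wp_def)
qed

lemma wp_ge: "x \<in> set wp \<Longrightarrow> a1 + a2 \<le> x"
  using cell_ge set_wp by auto

lemma set_w0: "set w0 = {0..<total mp}"
proof (intro set_eqI iffI)
  fix x assume x: "x \<in> set w0"
  have "x \<in> set X1 \<union> set X2 \<union> set wp" using x by (auto simp: w0_def wp_eq)
  then show "x \<in> {0..<total mp}"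
  proof (elim UnE)
    assume "x \<in> set X1" then have "valid mp 0 0 x" "x = cell mp 0 0 x" by (auto simp: X1_def valid0 cell00)
    then show ?thesis using cell_lt_total by (metis atLeastLessThan_iff zero_le)
  next
    assume "x \<in> set X2"
    then have "valid mp 0 1 (x - a1)" "x = cell mp 0 1 (x - a1)" by (auto simp: X2_def valid0 cell01 cell01s)
    then show ?thesis using cell_lt_total by (metis atLeastLessThan_iff zero_le)
  next
    assume "x \<in> set wp" then show ?thesis using set_wp cell_lt_total by auto
  qed
next
  fix x assume "x \<in> {0..<total mp}"
  then obtain k r c where v: "valid mp k r c" "x = cell mp k r c" using cell_surj by force
  show "x \<in> set w0"
  proof (cases "k = 0")
    case True
    then have "(r = 0 \<and> c < a1) \<or> (r = 1 \<and> c < a2)" using v valid0 by simp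
    then show ?thesis using v True by (auto simp: w0_def X1_def X2_def cell00 cell01 cell01s)
  next
    case False
    then have "x \<in> set wp" using v set_wp by auto
    then show ?thesis by (auto simp: w0_def wp_eq)
  qed
qed

lemma distinct_w0: "distinct w0"
proof -
  have d: "distinct (Aw @ Bw)" using distinct_wp wp_eq by simp
  have "set (Aw @ Bw) \<inter> (set X1 \<union> set X2) = {}"
    using wp_ge wp_eq by (fastforce simp: X1_def X2_def)
  then show ?thesis using d by (auto simp: w0_def X1_def X2_def)
qed

lemma w0_ml: "w0 \<in> mlwords (total mp)"
  using set_w0 distinct_w0 by (simp add: mlwords_def)

definition Fp :: "nat \<Rightarrow> nat" where
  "Fp x = (if x < a2 then a1 + x else if a1 \<le> x \<and> x < a1 + a2 then x - a1 else x)"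

lemma Lset: "set X1 \<union> set X2 = {0..<a1 + a2}"
  using a2_le by (auto simp: X1_def X2_def)

lemma colkey_X1: "x < a1 \<Longrightarrow> colkey mp x = (0, x)"
  using colkey_cell[of mp 0 0 x] by (simp add: valid0 cell00)

lemma colkey_X2: "a1 \<le> x \<Longrightarrow> x < a1 + a2 \<Longrightarrow> colkey mp x = (0, x - a1)"
  using colkey_cell[of mp 0 1 "x - a1"] by (simp add: valid0 cell01s)

lemma sv_X1: "x < a1 \<Longrightarrow> (Vv \<circ> rowkey mp) x = (mone :: ('a::comm_ring_1) mat3)"
  using rowkey_cell[of mp 0 0 x] by (simp add: valid0 cell00 Vv_def)

lemma sv_X2: "a1 \<le> x \<Longrightarrow> x < a1 + a2 \<Longrightarrow> (Vv \<circ> rowkey mp) x = (P23 :: ('a::comm_ring_1) mat3)"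
  using rowkey_cell[of mp 0 1 "x - a1"] by (simp add: valid0 cell01s Vv_def)

lemma Fp_inv: "Fp (Fp x) = x"
  using a2_le by (auto simp: Fp_def)

lemma Fp_out: "x \<notin> {0..<a1 + a2} \<Longrightarrow> Fp x = x"
  using a2_le by (auto simp: Fp_def)

lemma Fp_C: "Fp \<in> Cset (colkey mp) (set X1 \<union> set X2)"
proof -
  have "Fp permutes {0..<a1 + a2}"
    unfolding permutes_def
  proof (intro conjI allI impI)
    fix x assume "x \<notin> {0..<a1 + a2}" then show "Fp x = x" by (rule Fp_out)
  next
    fix y show "\<exists>!x. Fp x = y"
      by (rule ex1I[of _ "Fp y"]) (auto simp: Fp_inv dest: arg_cong[of _ _ Fp])
  qed
  moreover have "colkey mp (Fp x) = colkey mp x" if "x \<in> {0..<a1 + a2}" for x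
    using that a2_le by (auto simp: Fp_def colkey_X1 colkey_X2)
  ultimately show ?thesis unfolding Cset_def Lset by auto
qed

lemma L_key_cases: "z \<in> {0..<a1 + a2} \<Longrightarrow> colkey mp z = (0, c) \<Longrightarrow> z = c \<or> (z = a1 + c \<and> c < a2)"
  by (cases "z < a1") (auto simp: colkey_X1 colkey_X2)

lemma hnotF:
  assumes c1: "c1 \<in> Cset (colkey mp) (set X1 \<union> set X2)" and ne: "c1 \<noteq> Fp"
  shows "\<exists>x\<in>set X2. (Vv \<circ> rowkey mp) (c1 x) = (P23 :: ('a::comm_ring_1) mat3)"
proof (rule ccontr)
  assume "\<not> ?thesis"
  then have nP: "\<And>x. x \<in> set X2 \<Longrightarrow> (Vv \<circ> rowkey mp) (c1 x) \<noteq> (P23 :: 'a mat3)" by blast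
  have p: "c1 permutes {0..<a1 + a2}" and k: "\<And>x. x \<in> {0..<a1 + a2} \<Longrightarrow> colkey mp (c1 x) = colkey mp x"
    using c1 unfolding Cset_def Lset by auto
  have inL: "\<And>x. x \<in> {0..<a1 + a2} \<Longrightarrow> c1 x \<in> {0..<a1 + a2}" by (rule permutes_in_image[OF p, THEN iffD2])
  have sw: "c1 (a1 + c) = c" if c: "c < a2" for c
  proof -
    have x: "a1 + c \<in> {0..<a1 + a2}" using c by simp
    have "colkey mp (c1 (a1 + c)) = (0, c)" using k[OF x] colkey_X2[of "a1 + c"] c by simp
    then have "c1 (a1 + c) = c \<or> (c1 (a1 + c) = a1 + c \<and> c < a2)" using L_key_cases inL[OF x] by blast
    moreover have "c1 (a1 + c) \<noteq> a1 + c"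
    proof
      assume "c1 (a1 + c) = a1 + c"
      moreover have "a1 + c \<in> set X2" using c by (simp add: X2_def)
      ultimately show False using nP[of "a1 + c"] sv_X2[of "a1 + c"] c by auto
    qed
    ultimately show ?thesis by blast
  qed
  have "c1 = Fp"
  proof
    fix y
    show "c1 y = Fp y"
    proof (cases "y \<in> {0..<a1 + a2}")
      case False then show ?thesis using p Fp_out by (simp add: permutes_not_in)
    next
      case yL: True
      show ?thesis
      proof (cases "y < a2")
        case True
        have "colkey mp (c1 y) = (0, y)" using k[OF yL] colkey_X1[of y] True a2_le by simp
        then have "c1 y = y \<or> c1 y = a1 + y" using L_key_cases inL[OF yL] by blast
        moreover have "c1 y \<noteq> y"
        proof
          assume "c1 y = y"
          moreover have "c1 (a1 + y) = y" by (rule sw[OF True])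
          ultimately have "c1 y = c1 (a1 + y)" by simp
          then have "y = a1 + y" using permutes_inj[OF p] by (auto dest: injD)
          then show False using True a2_le by simp
        qed
        ultimately show ?thesis using True by (simp add: Fp_def)
      next
        case False
        show ?thesis
        proof (cases "y < a1")
          case True
          have "colkey mp (c1 y) = (0, y)" using k[OF yL] colkey_X1[of y] True by simp
          then have "c1 y = y" using L_key_cases inL[OF yL] False by fastforce
          then show ?thesis using True False by (simp add: Fp_def)
        next
          case ge: False
          then have "y - a1 < a2" using yL by auto
          then have "c1 (a1 + (y - a1)) = y - a1" by (rule sw)
          then show ?thesis using ge False yL by (simp add: Fp_def)
        qed
      qed
    qed
  qed
  then show False using ne by simp
qed

lemma hdiag: "c1 \<in> Cset (colkey mp) (set X1 \<union> set X2) \<Longrightarrow> x \<in> set X1 \<union> set X2 \<Longrightarrow>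
    (Vv \<circ> rowkey mp) (c1 x) = (mone :: ('a::comm_ring_1) mat3) \<or> (Vv \<circ> rowkey mp) (c1 x) = (P23 :: 'a mat3)"
proof -
  assume c1: "c1 \<in> Cset (colkey mp) (set X1 \<union> set X2)" and x: "x \<in> set X1 \<union> set X2"
  have p: "c1 permutes {0..<a1 + a2}" using c1 unfolding Cset_def Lset by auto
  have "c1 x \<in> {0..<a1 + a2}" using x Lset by (intro permutes_in_image[OF p, THEN iffD2]) auto
  show ?thesis
  proof (cases "c1 x < a1")
    case True
    have "(Vv \<circ> rowkey mp) (c1 x) = (mone :: 'a mat3)" by (rule sv_X1[OF True])
    then show ?thesis by simp
  next
    case False then have "(Vv \<circ> rowkey mp) (c1 x) = (P23 :: 'a mat3)"
      using \<open>c1 x \<in> {0..<a1 + a2}\<close> by (intro sv_X2) auto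
    then show ?thesis by simp
  qed
qed

lemma hF: "x \<in> set X2 \<Longrightarrow> (Vv \<circ> rowkey mp) (Fp x) = (mone :: ('a::comm_ring_1) mat3)"
proof -
  assume "x \<in> set X2"
  then have "a1 \<le> x" "x < a1 + a2" by (auto simp: X2_def)
  moreover have "x - a1 < a1" using a2_le calculation by auto
  ultimately show ?thesis using a2_le sv_X1[of "x - a1"] by (auto simp: Fp_def)
qed

lemma fst_keys: "fst (rowkey mp y) = fst (colkey mp y)"
  by (simp add: rowkey_def colkey_def Let_def)

lemma sv_eq: "(Vv \<circ> rowkey mp) y = Vv (fst (colkey mp y), snd (rowkey mp y))"
  by (simp add: fst_keys[symmetric])

lemma kd: "a \<in> set X1 \<union> set X2 \<Longrightarrow> b \<in> set Aw \<union> set Bw \<Longrightarrow> colkey mp a \<noteq> colkey mp b"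
proof -
  assume a: "a \<in> set X1 \<union> set X2" and b: "b \<in> set Aw \<union> set Bw"
  have "fst (colkey mp a) = 0" using a Lset by (cases "a < a1") (auto simp: colkey_X1 colkey_X2)
  moreover have "b \<in> set wp" using b wp_eq by simp
  then obtain k r c where "valid mp k r c" "k \<noteq> 0" "b = cell mp k r c" using set_wp by auto
  then have "fst (colkey mp b) \<noteq> 0" by (simp add: colkey_cell)
  ultimately show ?thesis by auto
qed

lemma c0_valid: "valid mp 3 0 c0"
  using R_pos by (auto simp: valid3 c0_def)

lemma hodd:
  assumes c2: "c2 \<in> Cset (colkey mp) (set Aw \<union> set Bw)"
  shows "is_odd (mprod (map ((Vv \<circ> rowkey mp) \<circ> c2) Aw) :: ('a::comm_ring_1) mat3)"
proof -
  have k: "\<And>x. x \<in> set Aw \<Longrightarrow> colkey mp (c2 x) = colkey mp x" using c2 by (auto simp: Cset_def)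
  have ev: "\<forall>M\<in>set (map ((Vv \<circ> rowkey mp) \<circ> c2) (concat (map colL M0))). is_even (M :: 'a mat3)"
  proof
    fix M assume "M \<in> set (map ((Vv \<circ> rowkey mp) \<circ> c2) (concat (map colL M0)))"
    then obtain kc x where x: "kc \<in> set M0" "x \<in> set (colL kc)" "M = (Vv \<circ> rowkey mp) (c2 x)" by auto
    have v: "validcol kc" using x(1) set_GL by (auto simp: GL_def)
    have "fst kc = 1" using x(1) by (auto simp: M0_def)
    moreover have "colkey mp (c2 x) = kc" using k[of x] x colL_key[OF v] by (auto simp: Aw_def)
    ultimately have "M = Vv (1, snd (rowkey mp (c2 x)))" using x(3) sv_eq[of "c2 x"] by simp
    then show "is_even M" using Vv_even1 by simp
  qed
  have od: "is_odd ((Vv \<circ> rowkey mp) (c2 (cell mp 3 0 c0)) :: 'a mat3)"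
  proof -
    have "colkey mp (c2 (cell mp 3 0 c0)) = (3, c0)" using k[of "cell mp 3 0 c0"] colkey_cell[OF c0_valid] by (simp add: Aw_def)
    then have e: "(Vv \<circ> rowkey mp) (c2 (cell mp 3 0 c0)) = Vv (3, snd (rowkey mp (c2 (cell mp 3 0 c0))))"
      using sv_eq[of "c2 (cell mp 3 0 c0)"] by simp
    show ?thesis unfolding e by (rule Vv_odd3)
  qed
  have e: "map ((Vv \<circ> rowkey mp) \<circ> c2) Aw = map ((Vv \<circ> rowkey mp) \<circ> c2) (concat (map colL M0)) @ [(Vv \<circ> rowkey mp) (c2 (cell mp 3 0 c0))]"
    by (simp add: Aw_def)
  show ?thesis unfolding e by (rule mprod_even_odd[OF ev od])
qed

lemma gval_M3: "gval kc \<in> M3" by (simp add: gval_def M3s)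

lemma Gm_wp: "Gm (colkey mp) (Vv \<circ> rowkey mp) wp = (mprod (map gval GL) :: ('a::comm_ring_1) mat3)"
proof -
  have vGL: "\<And>kc. kc \<in> set GL \<Longrightarrow> validcol kc" using set_GL by auto
  have hdk: "colkey mp (hd (colL kc)) = kc" if "validcol kc" for kc
    using colL_key[OF that, of "hd (colL kc)"] colL_hd[of kc] by (metis list.sel(1) list.set_intros(1))
  have "Gm (colkey mp) (Vv \<circ> rowkey mp) (concat (map colL GL)) = mprod (map (Gm (colkey mp) (Vv \<circ> rowkey mp)) (map colL GL))"
  proof (rule Gm_concat[where kk = "\<lambda>L. colkey mp (hd L)"])
    show "distinct (concat (map colL GL))" using distinct_wp by (simp add: wp_def)
    show "\<And>L x. L \<in> set (map colL GL) \<Longrightarrow> x \<in> set L \<Longrightarrow> colkey mp x = colkey mp (hd L)"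
      using vGL colL_key hdk by auto
    have "map (\<lambda>L. colkey mp (hd L)) (map colL GL) = GL"
      unfolding map_map by (rule map_idI) (use vGL hdk in auto)
    then show "distinct (map (\<lambda>L. colkey mp (hd L)) (map colL GL))" using distinct_GL by simp
    show "\<And>x. (Vv \<circ> rowkey mp) x \<in> M3" by (rule Vv_M3')
  qed
  also have "\<dots> = mprod (map gval GL)"
    by (rule arg_cong[of _ _ mprod]) (auto simp: Gm_col vGL)
  finally show ?thesis by (simp add: wp_def)
qed

lemma Ch_row2: "\<exists>j. mprod (map gval CH) 2 j \<noteq> (0 :: 'a::field_char_0)"
proof (cases "r1 = 0")
  case True
  then have "CH = []" unfolding CH_def by simp
  then show ?thesis by (intro exI[of _ 2]) (simp add: mone_def)
next
  case False
  define Sf where "Sf k = (gval (1, g3 + k) :: 'a mat3)" for k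
  define T where "T = (if even r1 then [uM] else ([] :: 'a mat3 list))"
  have mt: "map gval (concat (map trip ks)) = concat (map (\<lambda>k. [uM, Sf k, uM]) ks)" for ks
    by (induction ks) (auto simp: trip_def gval_def Sf_def)
  have e: "map gval CH = uM # (concat (map (\<lambda>k. [uM, Sf k, uM]) [0..<mm]) @ T)"
    using False unfolding CH_def T_def by (auto simp: mt gval_def)
  have S: "\<forall>k\<in>set [0..<mm]. Sf k = Y1 \<or> Sf k = KM" by (auto simp: Sf_def gval_def)
  have sQ: "set (concat (map (\<lambda>k. [uM, Sf k, uM]) [0..<mm])) \<subseteq> M3" using S M3s by auto
  have sT: "set T \<subseteq> M3" using M3s by (auto simp: T_def)
  have "mprod (map gval CH) = mmul uM (mmul (mprod (concat (map (\<lambda>k. [uM, Sf k, uM]) [0..<mm]))) (mprod T))"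
    unfolding e by (simp add: mprod_append[OF sQ sT])
  moreover have "mprod T = mone \<or> mprod T = uM" by (auto simp: T_def mmul_mone_right M3s)
  ultimately show ?thesis using chain_row2[OF chain_Q[OF S]] by simp
qed

lemma X_nz: "\<exists>i j. (i = 1 \<or> i = 2) \<and> mprod (map gval GL) i j \<noteq> (0 :: 'a::field_char_0)"
proof -
  have s: "\<And>L. set (map gval L) \<subseteq> (M3 :: 'a mat3 set)" using gval_M3 by auto
  have e: "mprod (map gval GL) = mmul (mprod (map gval M0)) (mmul (mprod (map gval CH)) (mprod (map gval ZC :: 'a mat3 list)))"
    unfolding GL_def map_append by (simp add: mprod_append gval_M3 image_subset_iff)
  have g: "good2 (mprod (map gval M0) :: 'a mat3)"
    by (rule good2_mprod) (auto simp: M0_def gval_def good2_S good2_K good2_Y1)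
  have r: "rinv (mprod (map gval ZC) :: 'a mat3)"
    by (rule rinv_mprod) (auto simp: ZC_def gval_def rinv_D)
  obtain j0 where j0: "mprod (map gval CH) 2 j0 \<noteq> (0::'a)" using Ch_row2 by blast
  show ?thesis unfolding e by (rule final_nz[OF g r mprod_M3[OF s] j0])
qed

theorem main_loc: "mult (F :: 'a::field_char_0 itself) mp \<noteq> 0"
proof -
  obtain i j where i: "i = 1 \<or> i = 2" and ij: "mprod (map gval GL) i j \<noteq> (0 :: 'a)" using X_nz by blast
  have U: "{0..<total mp} = (set X1 \<union> set X2) \<union> (set Aw \<union> set Bw)"
    using set_w0 by (auto simp: w0_def)
  have "(\<Sum>c\<in>Cset (colkey mp) {0..<total mp}. of_int (sign c) * (mprod (map ((Vv \<circ> rowkey mp) \<circ> c) w0) i j :: 'a))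
      = of_int (sign Fp) * Gm (colkey mp) (Vv \<circ> rowkey mp) (Aw @ Bw) i (j :: nat)"
    unfolding U w0_def
  proof (rule lambda1_reduce[where F = Fp])
    show "\<And>x. (Vv \<circ> rowkey mp) x \<in> (M3 :: 'a mat3 set)" by (rule Vv_M3')
    show "distinct (X1 @ Aw @ X2 @ Bw)" using distinct_w0 by (simp add: w0_def)
    show "\<And>a b. a \<in> set X1 \<union> set X2 \<Longrightarrow> b \<in> set Aw \<union> set Bw \<Longrightarrow> colkey mp a \<noteq> colkey mp b" by (rule kd)
    show "Fp \<in> Cset (colkey mp) (set X1 \<union> set X2)" by (rule Fp_C)
    show "\<And>x. x \<in> set X2 \<Longrightarrow> (Vv \<circ> rowkey mp) (Fp x) = (mone :: 'a mat3)" by (rule hF)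
    show "\<And>c1 x. c1 \<in> Cset (colkey mp) (set X1 \<union> set X2) \<Longrightarrow> x \<in> set X1 \<union> set X2 \<Longrightarrow>
        (Vv \<circ> rowkey mp) (c1 x) = (mone :: 'a mat3) \<or> (Vv \<circ> rowkey mp) (c1 x) = (P23 :: 'a mat3)" by (rule hdiag)
    show "\<And>c1. c1 \<in> Cset (colkey mp) (set X1 \<union> set X2) \<Longrightarrow> c1 \<noteq> Fp \<Longrightarrow>
        \<exists>x\<in>set X2. (Vv \<circ> rowkey mp) (c1 x) = (P23 :: 'a mat3)" by (rule hnotF)
    show "\<And>c2. c2 \<in> Cset (colkey mp) (set Aw \<union> set Bw) \<Longrightarrow> is_odd (mprod (map ((Vv \<circ> rowkey mp) \<circ> c2) Aw) :: 'a mat3)"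
      by (rule hodd)
    show "i = 1 \<or> i = 2" by (rule i)
  qed
  also have "\<dots> = of_int (sign Fp) * mprod (map gval GL) i j" using Gm_wp[where 'a = 'a] wp_eq by simp
  finally have eq: "(\<Sum>c\<in>Cset (colkey mp) {0..<total mp}. of_int (sign c) * (mprod (map ((Vv \<circ> rowkey mp) \<circ> c) w0) i j :: 'a))
      = of_int (sign Fp) * (mprod (map gval GL) i j :: 'a)" .
  have "of_int (sign Fp) \<noteq> (0 :: 'a)" by (simp add: sign_def)
  then have nz: "(\<Sum>c\<in>Cset (colkey mp) {0..<total mp}. of_int (sign c) * (mprod (map ((Vv \<circ> rowkey mp) \<circ> c) w0) i j :: 'a)) \<noteq> (0 :: 'a)"
    unfolding eq using ij by simp
  show ?thesis by (rule reduce_main[OF w0_ml _ nz]) (rule Vv_part)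
qed

end

lemma ceil_half: "int ((r1 + 1) div 2) \<le> \<lceil>real r1 / 2\<rceil>"
proof -
  have "2 * ((r1 + 1) div 2) \<le> r1 + 1" by simp
  then have "real (2 * ((r1 + 1) div 2)) \<le> real (r1 + 1)" by (simp only: of_nat_le_iff)
  then have "real ((r1 + 1) div 2) \<le> (real r1 + 1) / 2" by simp
  then have "real_of_int (int ((r1 + 1) div 2)) - 1 < real r1 / 2" by simp
  then show ?thesis by (simp only: le_ceiling_iff)
qed

theorem proposition5p11:
  fixes F :: "'a::field_char_0 itself"
    and la1 :: "nat list" and g1 g2 g3 r1 r2 :: nat
  assumes "is_partition la1" and "length la1 \<le> 2"
    and "mkpart [g1 + g2 + g3, g2 + g3, g3] \<noteq> []"
    and "mkpart [r1 + r2, r2] \<noteq> []"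
    and "r1 \<le> 2 \<or> (3 \<le> r1 \<and> real (g1 + g2) \<ge> real_of_int \<lceil>real r1 / 2\<rceil> - 1)"
  shows "mult F [la1, mkpart [g1 + g2 + g3, g2 + g3, g3], [], mkpart [r1 + r2, r2]] \<noteq> 0"
proof -
  have G: "0 < g1 + g2 + g3"
  proof (rule ccontr)
    assume "\<not> 0 < g1 + g2 + g3"
    then have "g1 = 0" "g2 = 0" "g3 = 0" by auto
    then show False using assms(3) by (simp add: mkpart_def)
  qed
  have R: "0 < r1 + r2"
  proof (rule ccontr)
    assume "\<not> 0 < r1 + r2"
    then have "r1 = 0" "r2 = 0" by auto
    then show False using assms(4) by (simp add: mkpart_def)
  qed
  have mc: "(r1 - 1) div 2 \<le> g1 + g2"
    using assms(5)
  proof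
    assume "r1 \<le> 2" then show ?thesis by auto
  next
    assume a: "3 \<le> r1 \<and> real_of_int \<lceil>real r1 / 2\<rceil> - 1 \<le> real (g1 + g2)"
    have "real ((r1 + 1) div 2) \<le> real_of_int \<lceil>real r1 / 2\<rceil>"
      using ceil_half[of r1] by linarith
    then have "real ((r1 + 1) div 2) \<le> real (g1 + g2) + 1" using a by linarith
    then have "(r1 + 1) div 2 \<le> g1 + g2 + 1" by linarith
    moreover have "3 \<le> r1" using a by simp
    then have "(r1 - 1) div 2 + 1 = (r1 + 1) div 2" by presburger
    ultimately show ?thesis by linarith
  qed
  interpret conf la1 g1 g2 g3 r1 r2
    by unfold_locales (use assms(1,2) G R mc in auto)
  show ?thesis using main_loc[of F] unfolding mp_def .
qed



end
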